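(* Let $(A,B)$ be controllable and let $H^{(i)}$ be the sequence $H^{(i+1)}=G+\gamma M(L(H^{(i)}))^\top H^{(i)} M(L(H^{(i)}))$ with $H^{(0)}=0$. Then there exists a matrix $Y$ such that $0\preceq H^{(i)}\preceq Y$ for all $i$.
   Context: Let $A\in\mathbb{R}^{n\times n}$, $B\in\mathbb{R}^{n\times m}$, $Q=Q^\top\succeq0$, $R=R^\top\succ0$, $\gamma\in[0,1)$, $N\in\mathbb{N}$. Symmetric matrices $H$ of size $((N+2)n+m)$ are partitioned into blocks $h_{ab}$, $a,b\in\{x,u,r_0,\dots,r_N\}$ (sizes $n,m,n,\dots,n$). For $H$ with invertible $h_{uu}$, $L(H)=-h_{uu}^{-1}[h_{ux},h_{ur_1},\dots,h_{ur_N}]=[L_x,L_1,\dots,L_N]$, and $L(0):=0$. $G=\begin{bmatrix}Q&0&-Q&0\\0&R&0&0\\-Q&0&Q&0\\0&0&0&0\end{bmatrix}$ (blocks $x$, $u$, $r_0$, $(r_1,\dots,r_N)$). $M(L)$ is the square matrix mapping $[x;u;r_0;\dots;r_N]$ to $[Ax+Bu;\;L_x(Ax+Bu)+L_1r_2+\dots+L_{N-1}r_N;\;r_1;\dots;r_N;\;0]$. *)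

theory Defs
  imports "Jordan_Normal_Form.Gauss_Jordan_Elimination" "Jordan_Normal_Form.DL_Rank"
begin

(* Dimensions: state n, input m, horizon N.  Joint vector [x; u; r_0; ...; r_N] has
   dimension d = (N+2)*n + m; block offsets: x at 0, u at n, r_k at n + m + k*n. *)

definition dimH :: "nat \<Rightarrow> nat \<Rightarrow> nat \<Rightarrow> nat" where
  "dimH n m N = (N + 2) * n + m"

definition sel :: "nat \<Rightarrow> nat \<Rightarrow> nat \<Rightarrow> real mat" where
  "sel k off d = mat k d (\<lambda>(i,j). if j = off + i then 1 else 0)"

definition psd :: "nat \<Rightarrow> real mat \<Rightarrow> bool" where
  "psd d X \<longleftrightarrow> X \<in> carrier_mat d d \<and> transpose_mat X = X \<and>
     (\<forall>v \<in> carrier_vec d. v \<bullet> (X *\<^sub>v v) \<ge> 0)"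

definition pd :: "nat \<Rightarrow> real mat \<Rightarrow> bool" where
  "pd d X \<longleftrightarrow> X \<in> carrier_mat d d \<and> transpose_mat X = X \<and>
     (\<forall>v \<in> carrier_vec d. v \<noteq> 0\<^sub>v d \<longrightarrow> v \<bullet> (X *\<^sub>v v) > 0)"

definition loewner_le :: "nat \<Rightarrow> real mat \<Rightarrow> real mat \<Rightarrow> bool" where
  "loewner_le d X Y \<longleftrightarrow> X \<in> carrier_mat d d \<and> Y \<in> carrier_mat d d \<and> psd d (Y - X)"

definition ctrb :: "nat \<Rightarrow> nat \<Rightarrow> real mat \<Rightarrow> real mat \<Rightarrow> real mat" where
  "ctrb n m A B = mat n (n * m) (\<lambda>(i,j). ((A ^\<^sub>m (j div m)) * B) $$ (i, j mod m))"

definition controllable :: "nat \<Rightarrow> nat \<Rightarrow> real mat \<Rightarrow> real mat \<Rightarrow> bool" where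
  "controllable n m A B \<longleftrightarrow> vec_space.rank n (ctrb n m A B) = n"

(* column picker d x (N+1)n : selects the blocks x, r_1, ..., r_N *)
definition colsel :: "nat \<Rightarrow> nat \<Rightarrow> nat \<Rightarrow> real mat" where
  "colsel n m N = mat (dimH n m N) ((N + 1) * n)
     (\<lambda>(j,i). if (i < n \<and> j = i) \<or> (n \<le> i \<and> j = i + n + m) then 1 else 0)"

(* L(H) = - h_uu^{-1} [h_ux, h_ur1, ..., h_urN]  (m x (N+1)n); L(H) = 0 if h_uu singular
   (in particular L(0) = 0). *)
definition gainL :: "nat \<Rightarrow> nat \<Rightarrow> nat \<Rightarrow> real mat \<Rightarrow> real mat" where
  "gainL n m N H =
    (let Su = sel m n (dimH n m N);
         huu = Su * H * transpose_mat Su;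
         hur = Su * H * colsel n m N
     in case mat_inverse huu of
          Some Hi \<Rightarrow> - (Hi * hur)
        | None \<Rightarrow> 0\<^sub>m m ((N + 1) * n))"

(* M(L): [x;u;r_0;...;r_N] \<mapsto> [Ax+Bu; L_x(Ax+Bu) + L_1 r_2 + ... + L_{N-1} r_N; r_1; ...; r_N; 0] *)
definition closedM :: "nat \<Rightarrow> nat \<Rightarrow> nat \<Rightarrow> real mat \<Rightarrow> real mat \<Rightarrow> real mat \<Rightarrow> real mat" where
  "closedM n m N A B L =
    (let d = dimH n m N;
         Px = sel n 0 d; Pu = sel m n d;
         xnext = A * Px + B * Pu;
         Lx = L * transpose_mat (sel n 0 ((N + 1) * n));
         Lr = L * transpose_mat (sel ((N - 1) * n) n ((N + 1) * n));
         Pr2N = sel ((N - 1) * n) (n + m + 2 * n) d;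
         Pr1N = sel (N * n) (n + m + n) d
     in transpose_mat Px * xnext
        + transpose_mat Pu * (Lx * xnext + Lr * Pr2N)
        + transpose_mat (sel (N * n) (n + m) d) * Pr1N)"

definition costG :: "nat \<Rightarrow> nat \<Rightarrow> nat \<Rightarrow> real mat \<Rightarrow> real mat \<Rightarrow> real mat" where
  "costG n m N Q R =
    (let d = dimH n m N; Px = sel n 0 d; Pu = sel m n d; Pr0 = sel n (n + m) d
     in transpose_mat (Px - Pr0) * Q * (Px - Pr0) + transpose_mat Pu * R * Pu)"

fun Hseq :: "nat \<Rightarrow> nat \<Rightarrow> nat \<Rightarrow> real mat \<Rightarrow> real mat \<Rightarrow> real mat \<Rightarrow> real mat \<Rightarrow> real \<Rightarrow> nat \<Rightarrow> real mat" where
  "Hseq n m N A B Q R \<gamma> 0 = 0\<^sub>m (dimH n m N) (dimH n m N)"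
| "Hseq n m N A B Q R \<gamma> (Suc i) =
    (let H = Hseq n m N A B Q R \<gamma> i; Mi = closedM n m N A B (gainL n m N H)
     in costG n m N Q R + \<gamma> \<cdot>\<^sub>m (transpose_mat Mi * H * Mi))"

end

theory Submission
  imports Defs
begin

lemma sel_carrier[simp]: "sel k off d \<in> carrier_mat k d"
  by (simp add: sel_def)
lemma sel_dims[simp]: "dim_row (sel k off d) = k" "dim_col (sel k off d) = d"
  by (simp_all add: sel_def)
lemma sel_index[simp]: "i < k \<Longrightarrow> j < d \<Longrightarrow> sel k off d $$ (i,j) = (if j = off + i then 1 else 0)"
  by (simp add: sel_def)

lemma sel_mult:
  assumes "off + k \<le> d" "X \<in> carrier_mat d c"
  shows "sel k off d * X = mat k c (\<lambda>(i,j). X $$ (off+i, j))"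
proof (rule eq_matI)
  fix i j assume ij: "i < dim_row (mat k c (\<lambda>(i,j). X $$ (off+i, j)))" "j < dim_col (mat k c (\<lambda>(i,j). X $$ (off+i, j)))"
  hence "i < k" "j < c" by auto
  have "(sel k off d * X) $$ (i,j) = (\<Sum>t\<in>{0..<d}. (if t = off + i then 1 else 0) * X $$ (t,j))"
    using \<open>i<k\<close> \<open>j<c\<close> assms by (auto simp: scalar_prod_def intro!: sum.cong)
  also have "\<dots> = X $$ (off+i, j)" using \<open>i<k\<close> assms
    by (simp add: if_distrib[of "\<lambda>x. x * _"] sum.delta' cong: if_cong)
  finally show "(sel k off d * X) $$ (i,j) = mat k c (\<lambda>(i,j). X $$ (off+i, j)) $$ (i,j)"
    using \<open>i<k\<close> \<open>j<c\<close> by simp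
qed (use assms in auto)

lemma selT_mult:
  assumes "X \<in> carrier_mat k c"
  shows "(sel k off d)\<^sup>T * X = mat d c (\<lambda>(t,j). if off \<le> t \<and> t < off + k then X $$ (t - off, j) else 0)"
proof (rule eq_matI)
  fix t j assume "t < dim_row (mat d c (\<lambda>(t,j). if off \<le> t \<and> t < off + k then X $$ (t - off, j) else 0))"
     "j < dim_col (mat d c (\<lambda>(t,j). if off \<le> t \<and> t < off + k then X $$ (t - off, j) else 0))"
  hence tj: "t < d" "j < c" by auto
  have "((sel k off d)\<^sup>T * X) $$ (t,j) = (\<Sum>i\<in>{0..<k}. (if i = t - off \<and> off \<le> t then 1 else 0) * X $$ (i,j))"
    using tj assms by (auto simp: scalar_prod_def intro!: sum.cong)
  also have "\<dots> = (if off \<le> t \<and> t < off + k then X $$ (t - off, j) else 0)"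
    by (cases "off \<le> t") (auto simp add: if_distrib[of "\<lambda>x. x * _"] sum.delta' cong: if_cong)
  finally show "((sel k off d)\<^sup>T * X) $$ (t,j) = mat d c (\<lambda>(t,j). if off \<le> t \<and> t < off + k then X $$ (t - off, j) else 0) $$ (t,j)"
    using tj by simp
qed (use assms in auto)

lemma mult_selT:
  assumes "off + k \<le> d" "X \<in> carrier_mat r d"
  shows "X * (sel k off d)\<^sup>T = mat r k (\<lambda>(i,j). X $$ (i, off+j))"
proof (rule eq_matI)
  fix i j assume "i < dim_row (mat r k (\<lambda>(i,j). X $$ (i, off+j)))" "j < dim_col (mat r k (\<lambda>(i,j). X $$ (i, off+j)))"
  hence ij: "i < r" "j < k" by auto
  have "(X * (sel k off d)\<^sup>T) $$ (i,j) = (\<Sum>t\<in>{0..<d}. X $$ (i,t) * (if t = off + j then 1 else 0))"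
    using ij assms by (auto simp: scalar_prod_def intro!: sum.cong)
  also have "\<dots> = X $$ (i, off+j)" using ij assms
    by (simp add: if_distrib[of "\<lambda>x. _ * x"] sum.delta' cong: if_cong)
  finally show "(X * (sel k off d)\<^sup>T) $$ (i,j) = mat r k (\<lambda>(i,j). X $$ (i, off+j)) $$ (i,j)"
    using ij by simp
qed (use assms in auto)

lemma mult_sel:
  assumes "X \<in> carrier_mat r k"
  shows "X * sel k off d = mat r d (\<lambda>(i,t). if off \<le> t \<and> t < off + k then X $$ (i, t - off) else 0)"
proof (rule eq_matI)
  fix i t assume "i < dim_row (mat r d (\<lambda>(i,t). if off \<le> t \<and> t < off + k then X $$ (i, t - off) else 0))"
     "t < dim_col (mat r d (\<lambda>(i,t). if off \<le> t \<and> t < off + k then X $$ (i, t - off) else 0))"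
  hence tj: "i < r" "t < d" by auto
  have "(X * sel k off d) $$ (i,t) = (\<Sum>j\<in>{0..<k}. X $$ (i,j) * (if j = t - off \<and> off \<le> t then 1 else 0))"
    using tj assms by (auto simp: scalar_prod_def intro!: sum.cong)
  also have "\<dots> = (if off \<le> t \<and> t < off + k then X $$ (i, t - off) else 0)"
    by (cases "off \<le> t") (auto simp add: if_distrib[of "\<lambda>x. _ * x"] sum.delta' cong: if_cong)
  finally show "(X * sel k off d) $$ (i,t) = mat r d (\<lambda>(i,t). if off \<le> t \<and> t < off + k then X $$ (i, t - off) else 0) $$ (i,t)"
    using tj by simp
qed (use assms in auto)


locale lqt =
  fixes n m N :: nat and A B Q R :: "real mat" and \<gamma> :: real
  assumes A: "A \<in> carrier_mat n n" and B: "B \<in> carrier_mat n m"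
    and Qpsd: "psd n Q" and Rpd: "pd m R" and g0: "0 \<le> \<gamma>" and g1: "\<gamma> < 1"
begin

abbreviation "dd \<equiv> dimH n m N"
abbreviation "Px \<equiv> sel n 0 dd"
abbreviation "Pu \<equiv> sel m n dd"
abbreviation "Pr0 \<equiv> sel n (n+m) dd"
definition "Pr k = sel n (n+m+k*n) dd"
definition "xn = A * Px + B * Pu"
definition "Kg L = L * (sel n 0 ((N+1)*n))\<^sup>T * xn + L * (sel ((N-1)*n) n ((N+1)*n))\<^sup>T * sel ((N-1)*n) (n+m+2*n) dd"
definition "M0 = closedM n m N A B (0\<^sub>m m ((N+1)*n))"

lemma dd_eq: "dd = (N+2)*n + m" by (simp add: dimH_def)

lemma xn_carrier[simp]: "xn \<in> carrier_mat n dd"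
  using A B by (simp add: xn_def)

lemma xn_dims[simp]: "dim_row xn = n" "dim_col xn = dd"
  using carrier_matD[OF xn_carrier] by auto

lemma xn_index: "a < n \<Longrightarrow> j < dd \<Longrightarrow> xn $$ (a,j) =
   (if j < n then A $$ (a,j) else 0) + (if n \<le> j \<and> j < n+m then B $$ (a, j-n) else 0)"
proof -
  assume aj: "a < n" "j < dd"
  have 1: "A * Px = mat n dd (\<lambda>(i,t). if 0 \<le> t \<and> t < 0+n then A$$(i,t-0) else 0)" by (rule mult_sel[OF A])
  have 2: "B * Pu = mat n dd (\<lambda>(i,t). if n \<le> t \<and> t < n+m then B$$(i,t-n) else 0)" by (rule mult_sel[OF B])
  show ?thesis unfolding xn_def 1 2 using aj by simp
qed

lemma Kg_carrier[simp]: "L \<in> carrier_mat m (n + N*n) \<Longrightarrow> Kg L \<in> carrier_mat m dd"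
  unfolding Kg_def by (intro add_carrier_mat mult_carrier_mat) auto

lemma Kg_dims[simp]: "L \<in> carrier_mat m (n + N*n) \<Longrightarrow> dim_row (Kg L) = m"
  "L \<in> carrier_mat m (n + N*n) \<Longrightarrow> dim_col (Kg L) = dd"
  using carrier_matD[OF Kg_carrier] by auto

lemma Kg_zero: "Kg (0\<^sub>m m (n + N*n)) = 0\<^sub>m m dd"
proof -
  have 1: "0\<^sub>m m (n + N*n) * (sel n 0 ((N+1)*n))\<^sup>T = 0\<^sub>m m n"
    by (rule left_mult_zero_mat) simp
  have 2: "0\<^sub>m m (n + N*n) * (sel ((N-1)*n) n ((N+1)*n))\<^sup>T = 0\<^sub>m m ((N-1)*n)"
    by (rule left_mult_zero_mat) simp
  have 3: "0\<^sub>m m n * xn = 0\<^sub>m m dd" by (rule left_mult_zero_mat) simp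
  have 4: "0\<^sub>m m ((N-1)*n) * sel ((N-1)*n) (n+m+2*n) dd = 0\<^sub>m m dd" by (rule left_mult_zero_mat) simp
  show ?thesis unfolding Kg_def 1 2 3 4 by simp
qed

lemma closedM_eq: "closedM n m N A B L = Px\<^sup>T * xn + Pu\<^sup>T * Kg L + (sel (N*n) (n+m) dd)\<^sup>T * sel (N*n) (n+m+n) dd"
  unfolding closedM_def Let_def xn_def Kg_def by simp

lemma closedM_carrier[simp]: "L \<in> carrier_mat m (n + N*n) \<Longrightarrow> closedM n m N A B L \<in> carrier_mat dd dd"
  unfolding closedM_eq by (intro add_carrier_mat mult_carrier_mat Kg_carrier) auto

lemma closedM_dims[simp]: "L \<in> carrier_mat m (n + N*n) \<Longrightarrow> dim_row (closedM n m N A B L) = dd"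
  "L \<in> carrier_mat m (n + N*n) \<Longrightarrow> dim_col (closedM n m N A B L) = dd"
  using carrier_matD[OF closedM_carrier] by auto

lemma closedM_index:
  assumes L: "L \<in> carrier_mat m (n + N*n)" and ij: "i < dd" "j < dd"
  shows "closedM n m N A B L $$ (i,j) = (if i < n then xn $$ (i,j) else 0) +
     (if n \<le> i \<and> i < n+m then Kg L $$ (i-n, j) else 0) +
     (if n+m \<le> i \<and> i < n+m+N*n \<and> j = i+n then 1 else 0)"
proof -
  have e3: "(sel (N*n) (n+m) dd)\<^sup>T * sel (N*n) (n+m+n) dd = mat dd dd (\<lambda>(t,j). if n+m \<le> t \<and> t < n+m+N*n \<and> j = t+n then 1 else 0)"
    unfolding selT_mult[OF sel_carrier] by (rule eq_matI) auto
  have e1: "Px\<^sup>T * xn = mat dd dd (\<lambda>(t,j). if 0 \<le> t \<and> t < 0+n then xn $$ (t-0, j) else 0)"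
    by (rule selT_mult) simp
  have e2: "Pu\<^sup>T * Kg L = mat dd dd (\<lambda>(t,j). if n \<le> t \<and> t < n+m then Kg L $$ (t-n, j) else 0)"
    by (rule selT_mult) (rule Kg_carrier[OF L])
  show ?thesis unfolding closedM_eq e1 e2 e3 using ij
    by (simp only: index_add_mat dim_row_mat dim_col_mat index_mat split: prod.splits) simp
qed

end

context lqt begin

lemma M0_carrier[simp]: "M0 \<in> carrier_mat dd dd" unfolding M0_def by simp

lemma closedM_split: assumes L: "L \<in> carrier_mat m (n + N*n)"
  shows "closedM n m N A B L = M0 + Pu\<^sup>T * Kg L"
proof -
  have e2: "Pu\<^sup>T * Kg L = mat dd dd (\<lambda>(t,j). if n \<le> t \<and> t < n+m then Kg L $$ (t-n, j) else 0)"
    by (rule selT_mult) (rule Kg_carrier[OF L])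
  show ?thesis unfolding e2 M0_def
    by (rule eq_matI) (use L in \<open>auto simp: closedM_index[OF L] closedM_index[OF zero_carrier_mat] Kg_zero\<close>)
qed

lemma Px_closedM: assumes L: "L \<in> carrier_mat m (n + N*n)"
  shows "Px * closedM n m N A B L = xn"
proof -
  have "Px * closedM n m N A B L = mat n dd (\<lambda>(i,j). closedM n m N A B L $$ (0+i, j))"
    by (rule sel_mult[OF _ closedM_carrier[OF L]]) (simp add: dd_eq)
  also have "\<dots> = xn"
  proof (rule eq_matI)
    fix i j assume ij: "i < dim_row xn" "j < dim_col xn"
    hence "i < dd" by (simp add: dd_eq)
    thus "mat n dd (\<lambda>(i,j). closedM n m N A B L $$ (0+i, j)) $$ (i, j) = xn $$ (i, j)"
      using ij by (simp add: closedM_index[OF L])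
  qed auto
  finally show ?thesis .
qed

lemma Pu_closedM: assumes L: "L \<in> carrier_mat m (n + N*n)"
  shows "Pu * closedM n m N A B L = Kg L"
proof -
  have "Pu * closedM n m N A B L = mat m dd (\<lambda>(i,j). closedM n m N A B L $$ (n+i, j))"
    by (rule sel_mult[OF _ closedM_carrier[OF L]]) (simp add: dd_eq)
  also have "\<dots> = Kg L"
  proof (rule eq_matI)
    fix i j assume ij: "i < dim_row (Kg L)" "j < dim_col (Kg L)"
    hence "n + i < dd" using L by (simp add: dd_eq)
    thus "mat m dd (\<lambda>(i,j). closedM n m N A B L $$ (n+i, j)) $$ (i, j) = Kg L $$ (i, j)"
      using ij L by (simp add: closedM_index[OF L])
  qed (use L in auto)
  finally show ?thesis .
qed

lemma Pu_M0: "Pu * M0 = 0\<^sub>m m dd"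
  unfolding M0_def by (simp add: Pu_closedM Kg_zero)

lemma Px_M0: "Px * M0 = xn"
  unfolding M0_def by (simp add: Px_closedM)

lemma Pr_carrier[simp]: "Pr k \<in> carrier_mat n dd" by (simp add: Pr_def)
lemma Pr_dims[simp]: "dim_row (Pr k) = n" "dim_col (Pr k) = dd" by (simp_all add: Pr_def)
lemma M0_dims[simp]: "dim_row M0 = dd" "dim_col M0 = dd" using carrier_matD[OF M0_carrier] by auto

lemma Pr_M0: assumes "k \<le> N"
  shows "Pr k * M0 = (if k < N then Pr (k+1) else 0\<^sub>m n dd)"
proof -
  have "Pr k * M0 = mat n dd (\<lambda>(i,j). M0 $$ (n+m+k*n+i, j))"
    unfolding Pr_def by (rule sel_mult[OF _ M0_carrier]) (use assms in \<open>auto simp: dd_eq\<close>)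
  also have "\<dots> = (if k < N then Pr (k+1) else 0\<^sub>m n dd)"
  proof (rule eq_matI)
    fix i j assume "i < dim_row (if k < N then Pr (k+1) else 0\<^sub>m n dd)" "j < dim_col (if k < N then Pr (k+1) else 0\<^sub>m n dd)"
    hence ij: "i < n" "j < dd" by (auto split: if_splits simp del: Pr_dims) (auto simp: Pr_def)
    have "k*n \<le> N*n" using assms by (rule mult_le_mono1)
    hence "k*n + i < N*n + n" using ij by linarith
    hence lt: "n+m+k*n+i < dd" by (simp add: dd_eq)
    have kk: "k < N \<Longrightarrow> k*n + n \<le> N*n"
    proof -
      assume "k < N" hence "Suc k * n \<le> N * n" by (intro mult_le_mono1) simp
      thus ?thesis by simp
    qed
    show "mat n dd (\<lambda>(i,j). M0 $$ (n+m+k*n+i, j)) $$ (i,j) = (if k < N then Pr (k+1) else 0\<^sub>m n dd) $$ (i,j)"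
      using ij lt assms kk unfolding M0_def
      by (auto simp: closedM_index[OF zero_carrier_mat] Pr_def algebra_simps)
  qed auto
  finally show ?thesis .
qed

end

lemma selselT: assumes "off1 + k1 \<le> d" "off2 + k2 \<le> d"
  shows "sel k1 off1 d * (sel k2 off2 d)\<^sup>T = mat k1 k2 (\<lambda>(i,j). if off1 + i = off2 + j then 1 else 0)"
  unfolding mult_selT[OF assms(2) sel_carrier] using assms by (intro eq_matI) auto

context lqt begin

lemma Q: "Q \<in> carrier_mat n n" using Qpsd by (simp add: psd_def)
lemma R: "R \<in> carrier_mat m m" using Rpd by (simp add: pd_def)
lemma Qsym: "Q\<^sup>T = Q" using Qpsd by (simp add: psd_def)
lemma Rsym: "R\<^sup>T = R" using Rpd by (simp add: pd_def)

lemma n_le: "n \<le> dd" "n + m \<le> dd" "n + m + n \<le> dd" by (simp_all add: dd_eq)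

lemma PxPuT: "Px * Pu\<^sup>T = 0\<^sub>m n m"
  using n_le by (subst selselT) (auto intro!: eq_matI)
lemma PuPuT: "Pu * Pu\<^sup>T = 1\<^sub>m m"
  using n_le by (subst selselT) (auto intro!: eq_matI)
lemma PuPxT: "Pu * Px\<^sup>T = 0\<^sub>m m n"
  using n_le by (subst selselT) (auto intro!: eq_matI)
lemma PuPr0T: "Pu * Pr0\<^sup>T = 0\<^sub>m m n"
  using n_le by (subst selselT) (auto intro!: eq_matI)
lemma PxPr0T: "Px * Pr0\<^sup>T = 0\<^sub>m n n"
  using n_le by (subst selselT) (auto intro!: eq_matI)
lemma Pr0Pr0T: "Pr0 * Pr0\<^sup>T = 1\<^sub>m n"
  using n_le by (subst selselT) (auto intro!: eq_matI)
lemma Pr0PuT: "Pr0 * Pu\<^sup>T = 0\<^sub>m n m"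
  using n_le by (subst selselT) (auto intro!: eq_matI)
lemma PrPuT: assumes "k \<le> N" shows "Pr k * Pu\<^sup>T = 0\<^sub>m n m"
proof -
  have "k*n \<le> N*n" using assms by (rule mult_le_mono1)
  hence "n+m+k*n + n \<le> dd" by (simp add: dd_eq)
  thus ?thesis unfolding Pr_def using n_le by (subst selselT) (auto intro!: eq_matI)
qed

lemma Kg_col0: assumes L: "L \<in> carrier_mat m (n + N*n)" and a: "a < m" and c: "c < n"
  shows "Kg L $$ (a, n+m+c) = 0"
proof -
  have t: "n+m+c < dd" using c by (simp add: dd_eq)
  have 1: "col xn (n+m+c) = 0\<^sub>v n"
    by (rule eq_vecI) (use t in \<open>auto simp: xn_index\<close>)
  have 2: "col (sel ((N-1)*n) (n+m+2*n) dd) (n+m+c) = 0\<^sub>v ((N-1)*n)"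
    by (rule eq_vecI) (use t c in auto)
  have c1: "L * (sel n 0 ((N+1)*n))\<^sup>T * xn \<in> carrier_mat m dd" using L by (intro mult_carrier_mat) auto
  have c2: "L * (sel ((N-1)*n) n ((N+1)*n))\<^sup>T * sel ((N-1)*n) (n+m+2*n) dd \<in> carrier_mat m dd" using L by (intro mult_carrier_mat) auto
  have "Kg L $$ (a, n+m+c) = (L * (sel n 0 ((N+1)*n))\<^sup>T * xn) $$ (a, n+m+c) + (L * (sel ((N-1)*n) n ((N+1)*n))\<^sup>T * sel ((N-1)*n) (n+m+2*n) dd) $$ (a, n+m+c)"
    unfolding Kg_def using c1 c2 a t by (subst index_add_mat) auto
  also have "\<dots> = 0"
    using L a t 1 2 by simp
  finally show ?thesis .
qed

lemma closedM_Pr0T: assumes L: "L \<in> carrier_mat m (n + N*n)"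
  shows "closedM n m N A B L * Pr0\<^sup>T = 0\<^sub>m dd n"
proof -
  have "closedM n m N A B L * Pr0\<^sup>T = mat dd n (\<lambda>(i,j). closedM n m N A B L $$ (i, n+m+j))"
    by (rule mult_selT[OF _ closedM_carrier[OF L]]) (simp add: dd_eq)
  also have "\<dots> = 0\<^sub>m dd n"
  proof (rule eq_matI)
    fix i j assume ij: "i < dim_row (0\<^sub>m dd n :: real mat)" "j < dim_col (0\<^sub>m dd n :: real mat)"
    hence t: "i < dd" "n+m+j < dd" "j < n" by (auto simp: dd_eq)
    show "mat dd n (\<lambda>(i,j). closedM n m N A B L $$ (i, n+m+j)) $$ (i,j) = 0\<^sub>m dd n $$ (i,j)"
      using t by (auto simp: closedM_index[OF L] xn_index Kg_col0[OF L])
  qed auto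
  finally show ?thesis .
qed

end

definition qf :: "real mat \<Rightarrow> real vec \<Rightarrow> real" where "qf H z = z \<bullet> (H *\<^sub>v z)"

lemma smult_mat_vec: fixes H :: "real mat" shows "H \<in> carrier_mat k d \<Longrightarrow> z \<in> carrier_vec d \<Longrightarrow> (c \<cdot>\<^sub>m H) *\<^sub>v z = c \<cdot>\<^sub>v (H *\<^sub>v z)"
  by (rule eq_vecI) (auto simp: row_smult carrier_vecD)

lemma zero_mat_vec: fixes z :: "real vec" shows "z \<in> carrier_vec d \<Longrightarrow> 0\<^sub>m k d *\<^sub>v z = 0\<^sub>v k"
  by (rule eq_vecI) auto

lemma mat_vec_uminus: fixes U :: "real mat" shows "U \<in> carrier_mat k d \<Longrightarrow> c \<in> carrier_vec d \<Longrightarrow> U *\<^sub>v (- c) = - (U *\<^sub>v c)"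
  by (rule eq_vecI) (auto simp: scalar_prod_uminus_right carrier_vecD)

lemma qf_zero[simp]: "z \<in> carrier_vec d \<Longrightarrow> qf (0\<^sub>m d d) z = 0"
  by (simp add: qf_def zero_mat_vec)

lemma qf_add: "H1 \<in> carrier_mat d d \<Longrightarrow> H2 \<in> carrier_mat d d \<Longrightarrow> z \<in> carrier_vec d \<Longrightarrow>
  qf (H1 + H2) z = qf H1 z + qf H2 z"
  unfolding qf_def by (simp add: add_mult_distrib_mat_vec scalar_prod_add_distrib[of _ d])

lemma qf_minus: "H1 \<in> carrier_mat d d \<Longrightarrow> H2 \<in> carrier_mat d d \<Longrightarrow> z \<in> carrier_vec d \<Longrightarrow>
  qf (H1 - H2) z = qf H1 z - qf H2 z"
  unfolding qf_def by (simp add: minus_mult_distrib_mat_vec scalar_prod_minus_distrib[of _ d])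

lemma qf_smult: "H \<in> carrier_mat d d \<Longrightarrow> z \<in> carrier_vec d \<Longrightarrow> qf (c \<cdot>\<^sub>m H) z = c * qf H z"
  unfolding qf_def by (simp add: smult_mat_vec)

lemma qf_PtSP: assumes P: "P \<in> carrier_mat k d" and S: "S \<in> carrier_mat k k" and z: "z \<in> carrier_vec d"
  shows "qf (P\<^sup>T * S * P) z = qf S (P *\<^sub>v z)"
proof -
  have "(P\<^sup>T * S * P) *\<^sub>v z = (P\<^sup>T * S) *\<^sub>v (P *\<^sub>v z)"
    using P S z by (intro assoc_mult_mat_vec[of _ d k]) auto
  also have "\<dots> = P\<^sup>T *\<^sub>v (S *\<^sub>v (P *\<^sub>v z))"
    using P S z by (intro assoc_mult_mat_vec[of _ d k]) auto
  finally have "(P\<^sup>T * S * P) *\<^sub>v z = P\<^sup>T *\<^sub>v (S *\<^sub>v (P *\<^sub>v z))" .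
  hence "qf (P\<^sup>T * S * P) z = z \<bullet> (P\<^sup>T *\<^sub>v (S *\<^sub>v (P *\<^sub>v z)))" by (simp add: qf_def)
  also have "\<dots> = (P\<^sup>T *\<^sub>v (S *\<^sub>v (P *\<^sub>v z))) \<bullet> z" using P S z by (intro comm_scalar_prod[of _ d]) auto
  also have "\<dots> = (S *\<^sub>v (P *\<^sub>v z)) \<bullet> (P *\<^sub>v z)" using P S z by (intro transpose_vec_mult_scalar) auto
  also have "\<dots> = qf S (P *\<^sub>v z)" unfolding qf_def using P S z by (intro comm_scalar_prod[of _ k]) auto
  finally show ?thesis .
qed

lemma sym_bilin: fixes H :: "real mat" assumes H: "H \<in> carrier_mat d d" "H\<^sup>T = H" and x: "x \<in> carrier_vec d" and y: "y \<in> carrier_vec d"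
  shows "x \<bullet> (H *\<^sub>v y) = y \<bullet> (H *\<^sub>v x)"
proof -
  have "x \<bullet> (H *\<^sub>v y) = (H\<^sup>T *\<^sub>v x) \<bullet> y" by (rule transpose_vec_mult_scalar[OF H(1) y x, symmetric])
  also have "\<dots> = (H *\<^sub>v x) \<bullet> y" using H by simp
  also have "\<dots> = y \<bullet> (H *\<^sub>v x)" using H x y by (intro comm_scalar_prod[of _ d]) auto
  finally show ?thesis .
qed

lemma sym_PHPt: fixes H :: "real mat" assumes H: "H \<in> carrier_mat d d" "H\<^sup>T = H" and P: "P \<in> carrier_mat k d"
  shows "(P * H * P\<^sup>T)\<^sup>T = P * H * P\<^sup>T"
proof -
  have PH: "P * H \<in> carrier_mat k d" using H P by auto
  have "(P * H * P\<^sup>T)\<^sup>T = (P\<^sup>T)\<^sup>T * (P * H)\<^sup>T" by (rule transpose_mult[OF PH]) (use P in auto)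
  also have "(P * H)\<^sup>T = H\<^sup>T * P\<^sup>T" by (rule transpose_mult[OF P H(1)])
  also have "(P\<^sup>T)\<^sup>T * (H\<^sup>T * P\<^sup>T) = P * H * P\<^sup>T" using H P by (simp add: assoc_mult_mat[of P k d H d _ k])
  finally show ?thesis .
qed

lemma sym_PtSP: fixes S :: "real mat" assumes S: "S \<in> carrier_mat k k" "S\<^sup>T = S" and P: "P \<in> carrier_mat k d"
  shows "(P\<^sup>T * S * P)\<^sup>T = P\<^sup>T * S * P"
  using sym_PHPt[OF S, of "P\<^sup>T" d] P by simp

lemma expand_sq:
  assumes H: "H \<in> carrier_mat d d" "H\<^sup>T = H" and P: "P \<in> carrier_mat k d"
    and w: "w \<in> carrier_vec d" and x: "x \<in> carrier_vec k"
  shows "qf H (w + P\<^sup>T *\<^sub>v x) = qf H w + 2 * (x \<bullet> (P *\<^sub>v (H *\<^sub>v w))) + qf (P * H * P\<^sup>T) x"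
proof -
  have Px: "P\<^sup>T *\<^sub>v x \<in> carrier_vec d" using P x by auto
  have Hw: "H *\<^sub>v w \<in> carrier_vec d" using H w by auto
  have HPx: "H *\<^sub>v (P\<^sup>T *\<^sub>v x) \<in> carrier_vec d" using H Px by auto
  have 1: "(P\<^sup>T *\<^sub>v x) \<bullet> (H *\<^sub>v w) = x \<bullet> (P *\<^sub>v (H *\<^sub>v w))"
    using P x Hw by (intro transpose_vec_mult_scalar) auto
  have 2: "w \<bullet> (H *\<^sub>v (P\<^sup>T *\<^sub>v x)) = (P\<^sup>T *\<^sub>v x) \<bullet> (H *\<^sub>v w)"
    using sym_bilin[OF H w Px] .
  have 3: "(P\<^sup>T *\<^sub>v x) \<bullet> (H *\<^sub>v (P\<^sup>T *\<^sub>v x)) = qf (P * H * P\<^sup>T) x"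
  proof -
    have "(P\<^sup>T *\<^sub>v x) \<bullet> (H *\<^sub>v (P\<^sup>T *\<^sub>v x)) = x \<bullet> (P *\<^sub>v (H *\<^sub>v (P\<^sup>T *\<^sub>v x)))"
      using P x HPx by (intro transpose_vec_mult_scalar) auto
    also have "P *\<^sub>v (H *\<^sub>v (P\<^sup>T *\<^sub>v x)) = (P * H * P\<^sup>T) *\<^sub>v x"
      using P H x by (simp add: assoc_mult_mat_vec[of _ k d _ k])
    finally show ?thesis by (simp add: qf_def)
  qed
  have "qf H (w + P\<^sup>T *\<^sub>v x) = (w + P\<^sup>T *\<^sub>v x) \<bullet> (H *\<^sub>v w + H *\<^sub>v (P\<^sup>T *\<^sub>v x))"
    unfolding qf_def using H w Px by (simp add: mult_add_distrib_mat_vec)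
  also have "\<dots> = w \<bullet> (H *\<^sub>v w) + w \<bullet> (H *\<^sub>v (P\<^sup>T *\<^sub>v x)) + ((P\<^sup>T *\<^sub>v x) \<bullet> (H *\<^sub>v w) + (P\<^sup>T *\<^sub>v x) \<bullet> (H *\<^sub>v (P\<^sup>T *\<^sub>v x)))"
    using w Px Hw HPx by (simp add: add_scalar_prod_distrib[of _ d] scalar_prod_add_distrib[of _ d])
  finally show ?thesis using 1 2 3 by (simp add: qf_def)
qed

lemma complete_square:
  assumes H: "H \<in> carrier_mat d d" "H\<^sup>T = H" and P: "P \<in> carrier_mat k d"
    and Hi: "Hi \<in> carrier_mat k k" "P * H * P\<^sup>T * Hi = 1\<^sub>m k"
    and psd: "\<And>v. v \<in> carrier_vec k \<Longrightarrow> qf (P * H * P\<^sup>T) v \<ge> 0"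
    and w: "w \<in> carrier_vec d" and u: "u \<in> carrier_vec k"
  shows "qf H (w + P\<^sup>T *\<^sub>v (- (Hi *\<^sub>v (P *\<^sub>v (H *\<^sub>v w))))) \<le> qf H (w + P\<^sup>T *\<^sub>v u)"
proof -
  define b where "b = P *\<^sub>v (H *\<^sub>v w)"
  define c where "c = Hi *\<^sub>v b"
  define U where "U = P * H * P\<^sup>T"
  have b: "b \<in> carrier_vec k" using P H w by (simp add: b_def)
  have c: "c \<in> carrier_vec k" using Hi b by (simp add: c_def)
  have U: "U \<in> carrier_mat k k" "U\<^sup>T = U" using P H unfolding U_def by (auto simp only: sym_PHPt[OF H P]) auto
  have Uc: "U *\<^sub>v c = b" unfolding c_def using Hi U b
    by (simp add: assoc_mult_mat_vec[symmetric, of _ k k _ k] U_def)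
  have e1: "qf H (w + P\<^sup>T *\<^sub>v u) = qf H w + 2 * (u \<bullet> b) + qf U u"
    unfolding b_def U_def by (rule expand_sq[OF H P w u])
  have e2: "qf H (w + P\<^sup>T *\<^sub>v (- c)) = qf H w + 2 * ((-c) \<bullet> b) + qf U (-c)"
    unfolding b_def U_def by (rule expand_sq[OF H P w]) (use c in auto)
  have e3: "qf U (-c) = c \<bullet> b" unfolding qf_def using U c b Uc by (simp add: mat_vec_uminus)
  have e4: "(-c) \<bullet> b = - (c \<bullet> b)" using c b by simp
  have e5: "qf U (u + c) = qf U u + 2 * (u \<bullet> b) + c \<bullet> b"
  proof -
    have "qf U (u + c) = (u + c) \<bullet> (U *\<^sub>v u + b)" unfolding qf_def using U u c Uc by (simp add: mult_add_distrib_mat_vec)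
    also have "\<dots> = u \<bullet> (U *\<^sub>v u) + u \<bullet> b + (c \<bullet> (U *\<^sub>v u) + c \<bullet> b)"
      using U u c b by (simp add: add_scalar_prod_distrib[of _ k] scalar_prod_add_distrib[of _ k])
    also have "c \<bullet> (U *\<^sub>v u) = u \<bullet> b" using sym_bilin[OF U c u] Uc by simp
    finally show ?thesis by (simp add: qf_def)
  qed
  have "qf U (u + c) \<ge> 0" using psd u c unfolding U_def by auto
  thus ?thesis unfolding b_def[symmetric] c_def[symmetric] using e1 e2 e3 e4 e5 by simp
qed


lemma transpose_carrierI: "A \<in> carrier_mat nr nc \<Longrightarrow> A\<^sup>T \<in> carrier_mat nc nr" by simp

lemmas cI = mult_carrier_mat add_carrier_mat minus_carrier_mat smult_carrier_mat uminus_carrier_mat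
  mult_mat_vec_carrier add_carrier_vec minus_carrier_vec zero_carrier_mat one_carrier_mat sel_carrier transpose_carrierI
  zero_carrier_vec

context lqt begin

lemmas lc = Q R A B xn_carrier M0_carrier Pr_carrier

abbreviation "G \<equiv> costG n m N Q R"
abbreviation "E \<equiv> Px - Pr0"

lemma E_carrier[simp]: "E \<in> carrier_mat n dd" by (rule cI)+

lemma G_eq: "G = E\<^sup>T * Q * E + Pu\<^sup>T * R * Pu"
  unfolding costG_def Let_def ..

lemma G_carrier[simp]: "G \<in> carrier_mat dd dd"
  unfolding G_eq by (rule cI lc)+

lemma G_sym: "G\<^sup>T = G"
proof -
  have "G\<^sup>T = (E\<^sup>T * Q * E)\<^sup>T + (Pu\<^sup>T * R * Pu)\<^sup>T"
    unfolding G_eq by (rule transpose_add cI lc)+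
  also have "(E\<^sup>T * Q * E)\<^sup>T = E\<^sup>T * Q * E" by (rule sym_PtSP[OF Q Qsym E_carrier])
  also have "(Pu\<^sup>T * R * Pu)\<^sup>T = Pu\<^sup>T * R * Pu" by (rule sym_PtSP[OF R Rsym sel_carrier])
  finally show ?thesis unfolding G_eq .
qed

lemma qf_G: assumes z: "z \<in> carrier_vec dd"
  shows "qf G z = qf Q (E *\<^sub>v z) + qf R (Pu *\<^sub>v z)"
proof -
  have "qf G z = qf (E\<^sup>T * Q * E) z + qf (Pu\<^sup>T * R * Pu) z"
    unfolding G_eq by (rule qf_add cI lc z)+
  also have "\<dots> = qf Q (E *\<^sub>v z) + qf R (Pu *\<^sub>v z)"
    by (simp add: qf_PtSP[OF E_carrier Q z] qf_PtSP[OF sel_carrier R z])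
  finally show ?thesis .
qed

lemma qf_Q_nonneg: "v \<in> carrier_vec n \<Longrightarrow> qf Q v \<ge> 0"
  using Qpsd by (simp add: psd_def qf_def)

lemma qf_R_nonneg: "v \<in> carrier_vec m \<Longrightarrow> qf R v \<ge> 0"
proof -
  assume v: "v \<in> carrier_vec m"
  show ?thesis
  proof (cases "v = 0\<^sub>v m")
    case True thus ?thesis using R by (simp add: qf_def)
  next
    case False thus ?thesis using Rpd v by (simp add: pd_def qf_def less_imp_le)
  qed
qed

lemma qf_R_pos: "v \<in> carrier_vec m \<Longrightarrow> v \<noteq> 0\<^sub>v m \<Longrightarrow> qf R v > 0"
  using Rpd by (simp add: pd_def qf_def)

lemma qf_G_nonneg: "z \<in> carrier_vec dd \<Longrightarrow> qf G z \<ge> 0"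
proof -
  assume z: "z \<in> carrier_vec dd"
  have "E *\<^sub>v z \<in> carrier_vec n" "Pu *\<^sub>v z \<in> carrier_vec m" by (rule cI z)+
  thus ?thesis using qf_G[OF z] qf_Q_nonneg qf_R_nonneg by (simp add: add_nonneg_nonneg)
qed

lemma PuET: "Pu * E\<^sup>T = 0\<^sub>m m n"
proof -
  have "Pu * E\<^sup>T = Pu * (Px\<^sup>T - Pr0\<^sup>T)" by (subst transpose_minus) auto
  also have "\<dots> = Pu * Px\<^sup>T - Pu * Pr0\<^sup>T" by (rule mult_minus_distrib_mat) auto
  also have "\<dots> = 0\<^sub>m m n" unfolding PuPxT PuPr0T by (rule eq_matI) auto
  finally show ?thesis .
qed

lemma EPuT: "E * Pu\<^sup>T = 0\<^sub>m n m"
proof -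
  have "E * Pu\<^sup>T = Px * Pu\<^sup>T - Pr0 * Pu\<^sup>T" by (rule minus_mult_distrib_mat) auto
  also have "\<dots> = 0\<^sub>m n m" unfolding PxPuT Pr0PuT by (rule eq_matI) auto
  finally show ?thesis .
qed

lemma qf_G_PuT: assumes v: "v \<in> carrier_vec m" shows "qf G (Pu\<^sup>T *\<^sub>v v) = qf R v"
proof -
  have z: "Pu\<^sup>T *\<^sub>v v \<in> carrier_vec dd" by (rule cI v)+
  have "E *\<^sub>v (Pu\<^sup>T *\<^sub>v v) = (E * Pu\<^sup>T) *\<^sub>v v" by (rule assoc_mult_mat_vec[symmetric]) (rule cI v)+
  hence 1: "E *\<^sub>v (Pu\<^sup>T *\<^sub>v v) = 0\<^sub>v n" using v by (simp add: EPuT zero_mat_vec)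
  have "Pu *\<^sub>v (Pu\<^sup>T *\<^sub>v v) = (Pu * Pu\<^sup>T) *\<^sub>v v" by (rule assoc_mult_mat_vec[symmetric]) (rule cI v)+
  hence 2: "Pu *\<^sub>v (Pu\<^sup>T *\<^sub>v v) = v" using v by (simp add: PuPuT)
  have "Q *\<^sub>v 0\<^sub>v n \<in> carrier_vec n" by (rule cI lc)+
  hence "qf Q (0\<^sub>v n) = 0" unfolding qf_def by (rule scalar_prod_left_zero)
  thus ?thesis unfolding qf_G[OF z] 1 2 by simp
qed

lemma PuG: "Pu * G = R * Pu"
proof -
  have "Pu * G = Pu * (E\<^sup>T * Q * E) + Pu * (Pu\<^sup>T * R * Pu)"
    unfolding G_eq by (rule mult_add_distrib_mat cI lc)+
  also have "Pu * (E\<^sup>T * Q * E) = (Pu * E\<^sup>T) * Q * E"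
  proof -
    have c1: "E\<^sup>T * Q \<in> carrier_mat dd n" by (rule cI lc)+
    have "Pu * (E\<^sup>T * Q * E) = Pu * (E\<^sup>T * Q) * E" by (rule assoc_mult_mat[symmetric, OF sel_carrier c1 E_carrier])
    also have "Pu * (E\<^sup>T * Q) = Pu * E\<^sup>T * Q" by (rule assoc_mult_mat[symmetric]) (rule cI lc)+
    finally show ?thesis .
  qed
  also have "\<dots> = 0\<^sub>m m dd" unfolding PuET by (simp add: left_mult_zero_mat[OF Q] left_mult_zero_mat[OF E_carrier])
  also have "Pu * (Pu\<^sup>T * R * Pu) = (Pu * Pu\<^sup>T) * R * Pu"
  proof -
    have c1: "Pu\<^sup>T * R \<in> carrier_mat dd m" by (rule cI lc)+
    have "Pu * (Pu\<^sup>T * R * Pu) = Pu * (Pu\<^sup>T * R) * Pu" by (rule assoc_mult_mat[symmetric, OF sel_carrier c1 sel_carrier])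
    also have "Pu * (Pu\<^sup>T * R) = Pu * Pu\<^sup>T * R" by (rule assoc_mult_mat[symmetric]) (rule cI lc)+
    finally show ?thesis .
  qed
  also have "\<dots> = R * Pu" unfolding PuPuT using R by simp
  finally show ?thesis by (simp add: left_add_zero_mat[OF mult_carrier_mat[OF R sel_carrier]])
qed

lemma PuGPr0T: "Pu * G * Pr0\<^sup>T = 0\<^sub>m m n"
proof -
  have "Pu * G * Pr0\<^sup>T = R * (Pu * Pr0\<^sup>T)" unfolding PuG by (rule assoc_mult_mat cI lc)+
  thus ?thesis unfolding PuPr0T using R by (simp add: right_mult_zero_mat[OF R])
qed

end

context lqt begin

lemma colsel_carrier[simp]: "colsel n m N \<in> carrier_mat dd ((N+1)*n)"
  by (simp add: colsel_def)

lemma colsel_index: "t < dd \<Longrightarrow> i < (N+1)*n \<Longrightarrow> colsel n m N $$ (t,i) =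
   (if (t < n \<or> n+m+n \<le> t) \<and> i = (if t < n then t else t-n-m) then 1 else 0)"
  by (auto simp: colsel_def)

lemma colsel_mult: assumes X: "X \<in> carrier_mat ((N+1)*n) c"
  shows "colsel n m N * X = mat dd c (\<lambda>(t,j). if t < n then X$$(t,j) else if n+m+n \<le> t then X$$(t-n-m, j) else 0)"
proof (rule eq_matI)
  fix t j assume "t < dim_row (mat dd c (\<lambda>(t,j). if t < n then X$$(t,j) else if n+m+n \<le> t then X$$(t-n-m, j) else 0))"
    "j < dim_col (mat dd c (\<lambda>(t,j). if t < n then X$$(t,j) else if n+m+n \<le> t then X$$(t-n-m, j) else 0))"
  hence tj: "t < dd" "j < c" by auto
  have f: "(if t < n then t else t-n-m) < (N+1)*n" if "t < n \<or> n+m+n \<le> t" using tj that by (auto simp: dd_eq)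
  have "(colsel n m N * X) $$ (t,j) = (\<Sum>i\<in>{0..<(N+1)*n}. colsel n m N $$ (t,i) * X $$ (i,j))"
  proof -
    have dims: "dim_row (colsel n m N) = dd" "dim_col (colsel n m N) = (N+1)*n" using carrier_matD[OF colsel_carrier] by simp_all
    show ?thesis using tj carrier_matD[OF X] by (simp add: scalar_prod_def dims)
  qed
  also have "\<dots> = (\<Sum>i\<in>{0..<(N+1)*n}. (if i = (if t < n then t else t-n-m) then (if (t < n \<or> n+m+n \<le> t) then X $$ (i,j) else 0) else 0))"
    using tj by (intro sum.cong refl) (auto simp: colsel_index)
  also have "\<dots> = (if t < n then X$$(t,j) else if n+m+n \<le> t then X$$(t-n-m, j) else 0)"
    using f by (cases "t < n"; cases "n+m+n \<le> t") (simp_all add: sum.delta)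
  finally show "(colsel n m N * X) $$ (t,j) = mat dd c (\<lambda>(t,j). if t < n then X$$(t,j) else if n+m+n \<le> t then X$$(t-n-m, j) else 0) $$ (t,j)"
    using tj by simp
qed (use X carrier_matD[OF colsel_carrier] in auto)

definition "Ym = (sel n 0 ((N+1)*n))\<^sup>T * xn + (sel ((N-1)*n) n ((N+1)*n))\<^sup>T * sel ((N-1)*n) (n+m+2*n) dd"

lemma Ym_carrier[simp]: "Ym \<in> carrier_mat ((N+1)*n) dd"
  unfolding Ym_def by (rule cI lc)+

lemma Kg_eq: assumes L: "L \<in> carrier_mat m ((N+1)*n)" shows "Kg L = L * Ym"
proof -
  have "L * (sel n 0 ((N+1)*n))\<^sup>T * xn = L * ((sel n 0 ((N+1)*n))\<^sup>T * xn)"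
    by (rule assoc_mult_mat) (rule cI lc L)+
  moreover have "L * (sel ((N-1)*n) n ((N+1)*n))\<^sup>T * sel ((N-1)*n) (n+m+2*n) dd = L * ((sel ((N-1)*n) n ((N+1)*n))\<^sup>T * sel ((N-1)*n) (n+m+2*n) dd)"
    by (rule assoc_mult_mat) (rule cI lc L)+
  moreover have "L * ((sel n 0 ((N+1)*n))\<^sup>T * xn) + L * ((sel ((N-1)*n) n ((N+1)*n))\<^sup>T * sel ((N-1)*n) (n+m+2*n) dd) = L * Ym"
    unfolding Ym_def by (rule mult_add_distrib_mat[symmetric]) (rule cI lc L)+
  ultimately show ?thesis unfolding Kg_def by simp
qed

lemma Ym_index: assumes i: "i < (N+1)*n" and j: "j < dd"
  shows "Ym $$ (i,j) = (if i < n then xn $$ (i,j) else 0) + (if n \<le> i \<and> i < n + (N-1)*n \<and> j = n+m+2*n + (i-n) then 1 else 0)"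
proof -
  have 1: "(sel n 0 ((N+1)*n))\<^sup>T * xn = mat ((N+1)*n) dd (\<lambda>(t,j). if 0 \<le> t \<and> t < 0 + n then xn $$ (t-0,j) else 0)"
    by (rule selT_mult) (rule lc)
  have 2: "(sel ((N-1)*n) n ((N+1)*n))\<^sup>T * sel ((N-1)*n) (n+m+2*n) dd = mat ((N+1)*n) dd (\<lambda>(t,j). if n \<le> t \<and> t < n + (N-1)*n then sel ((N-1)*n) (n+m+2*n) dd $$ (t-n,j) else 0)"
    by (rule selT_mult) (rule cI)
  show ?thesis unfolding Ym_def 1 2 using i j by auto
qed

lemma colsel_Ym: "colsel n m N * Ym = M0 - Pr0\<^sup>T * (Pr0 * M0)"
proof -
  have 1: "Pr0 * M0 = mat n dd (\<lambda>(i,j). M0 $$ (n+m+i, j))" by (rule sel_mult[OF _ M0_carrier]) (simp add: dd_eq)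
  have 2: "Pr0\<^sup>T * (Pr0 * M0) = mat dd dd (\<lambda>(t,j). if n+m \<le> t \<and> t < n+m+n then (Pr0 * M0) $$ (t - (n+m), j) else 0)"
    by (rule selT_mult) (rule cI lc)+
  show ?thesis unfolding colsel_mult[OF Ym_carrier]
  proof (rule eq_matI)
    fix t j assume tj: "t < dim_row (M0 - Pr0\<^sup>T * (Pr0 * M0))" "j < dim_col (M0 - Pr0\<^sup>T * (Pr0 * M0))"
    hence t: "t < dd" "j < dd" by auto
    have NN: "0 < N \<Longrightarrow> n + (N-1)*n = N*n"
      by (metis Suc_diff_1 add.commute mult_Suc)
    have M0i: "M0 $$ (t,j) = (if t < n then xn $$ (t,j) else 0) + (if n+m \<le> t \<and> t < n+m+N*n \<and> j = t+n then 1 else 0)"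
      unfolding M0_def using t by (auto simp: closedM_index[OF zero_carrier_mat] Kg_zero)
    have "t - n - m < (N+1)*n" if "n+m+n \<le> t" using t that by (simp add: dd_eq)
    moreover have "t < (N+1)*n" if "t < n" using that by simp
    moreover have R: "(M0 - Pr0\<^sup>T * (Pr0 * M0)) $$ (t,j) = M0 $$ (t,j) - (if n+m \<le> t \<and> t < n+m+n then M0 $$ (t,j) else 0)"
    proof -
      have "(M0 - Pr0\<^sup>T * (Pr0 * M0)) $$ (t,j) = M0 $$ (t,j) - (Pr0\<^sup>T * (Pr0 * M0)) $$ (t,j)"
        using t by (subst index_minus_mat) (auto simp del: M0_dims simp: carrier_matD[OF M0_carrier] 2)
      also have "(Pr0\<^sup>T * (Pr0 * M0)) $$ (t,j) = (if n+m \<le> t \<and> t < n+m+n then M0 $$ (t,j) else 0)"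
        unfolding 2 using t by (auto simp: 1)
      finally show ?thesis .
    qed
    ultimately show "mat dd dd (\<lambda>(t,j). if t < n then Ym$$(t,j) else if n+m+n \<le> t then Ym$$(t-n-m, j) else 0) $$ (t,j)
      = (M0 - Pr0\<^sup>T * (Pr0 * M0)) $$ (t,j)"
    proof -
      have Y1: "Ym $$ (t,j) = xn $$ (t,j)" if "t < n" using that t by (simp add: Ym_index)
      have Y2: "Ym $$ (t-n-m,j) = (if t < n+m+N*n \<and> j = t+n then 1 else 0)" if tt: "n+m+n \<le> t"
      proof -
        have i: "t-n-m < (N+1)*n" using tt t by (simp add: dd_eq)
        have "Ym $$ (t-n-m,j) = (if t-n-m < n + (N-1)*n \<and> j = n+m+2*n + (t-n-m-n) then 1 else 0)"
          using Ym_index[OF i t(2)] tt by simp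
        also have "(t-n-m < n + (N-1)*n) = (t < n+m+N*n)"
        proof (cases "N = 0")
          case True
          thus ?thesis using tt by simp
        next
          case False thus ?thesis using NN tt by (simp; linarith)
        qed
        also have "(j = n+m+2*n + (t-n-m-n)) = (j = t+n)" using tt by auto
        finally show ?thesis .
      qed
      show ?thesis unfolding R M0i using t Y1 Y2 by auto
    qed
  qed auto
qed

end

lemma transpose_smult_mat: "(c \<cdot>\<^sub>m (X :: real mat))\<^sup>T = c \<cdot>\<^sub>m X\<^sup>T"
  by (rule eq_matI) auto

context lqt begin

abbreviation "Hs i \<equiv> Hseq n m N A B Q R \<gamma> i"
abbreviation "Ms i \<equiv> closedM n m N A B (gainL n m N (Hs i))"

lemma Nn: "(N+1)*n = n + N*n" by simp

lemma huu_carrier: "X \<in> carrier_mat dd dd \<Longrightarrow> Pu * X * Pu\<^sup>T \<in> carrier_mat m m"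
  by (rule cI | assumption)+

lemma gainL_carrier: assumes X: "X \<in> carrier_mat dd dd" shows "gainL n m N X \<in> carrier_mat m (n + N*n)"
proof (cases "mat_inverse (Pu * X * Pu\<^sup>T)")
  case None thus ?thesis unfolding gainL_def Let_def by simp
next
  case (Some Hi)
  hence Hi: "Hi \<in> carrier_mat m m" using mat_inverse(2)[OF huu_carrier[OF X]] by auto
  have "- (Hi * (Pu * X * colsel n m N)) \<in> carrier_mat m ((N+1)*n)"
    by (rule cI Hi X colsel_carrier)+
  thus ?thesis using Some unfolding gainL_def Let_def by simp
qed

lemma gainL_Some: assumes "mat_inverse (Pu * X * Pu\<^sup>T) = Some Hi"
  shows "gainL n m N X = - (Hi * (Pu * X * colsel n m N))"
  using assms unfolding gainL_def Let_def by simp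

lemma Kg_gain: assumes X: "X \<in> carrier_mat dd dd" and Z: "Pu * X * Pr0\<^sup>T = 0\<^sub>m m n"
  and S: "mat_inverse (Pu * X * Pu\<^sup>T) = Some Hi"
  shows "Kg (gainL n m N X) = - (Hi * (Pu * X * M0))"
proof -
  have Hi: "Hi \<in> carrier_mat m m" using mat_inverse(2)[OF huu_carrier[OF X] S] by auto
  have PX: "Pu * X \<in> carrier_mat m dd" by (rule cI X)+
  have L: "gainL n m N X \<in> carrier_mat m ((N+1)*n)" using gainL_carrier[OF X] by (simp only: Nn)
  have "Kg (gainL n m N X) = gainL n m N X * Ym" by (rule Kg_eq[OF L])
  also have "\<dots> = - (Hi * (Pu * X * colsel n m N)) * Ym" by (simp only: gainL_Some[OF S])
  also have "\<dots> = - (Hi * (Pu * X * colsel n m N) * Ym)"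
  proof (rule uminus_mult_left_mat)
    have "Hi * (Pu * X * colsel n m N) \<in> carrier_mat m ((N+1)*n)" by (rule cI Hi X colsel_carrier)+
    thus "dim_col (Hi * (Pu * X * colsel n m N)) = dim_row Ym" using Ym_carrier by auto
  qed
  also have "Hi * (Pu * X * colsel n m N) * Ym = Hi * ((Pu * X) * (colsel n m N * Ym))"
  proof -
    have "Hi * (Pu * X * colsel n m N) * Ym = Hi * ((Pu * X * colsel n m N) * Ym)"
      by (rule assoc_mult_mat) (rule cI Hi X colsel_carrier Ym_carrier)+
    also have "(Pu * X * colsel n m N) * Ym = (Pu * X) * (colsel n m N * Ym)"
      by (rule assoc_mult_mat) (rule cI Hi X colsel_carrier Ym_carrier)+
    finally show ?thesis .
  qed
  also have "(Pu * X) * (colsel n m N * Ym) = Pu * X * M0"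
  proof -
    have "(Pu * X) * (colsel n m N * Ym) = (Pu * X) * M0 - (Pu * X) * (Pr0\<^sup>T * (Pr0 * M0))"
      unfolding colsel_Ym by (rule mult_minus_distrib_mat) (rule cI X lc)+
    also have "(Pu * X) * (Pr0\<^sup>T * (Pr0 * M0)) = (Pu * X * Pr0\<^sup>T) * (Pr0 * M0)"
      by (rule assoc_mult_mat[symmetric]) (rule cI X lc)+
    also have "\<dots> = 0\<^sub>m m dd" unfolding Z by (rule left_mult_zero_mat) (rule cI lc)+
    also have "(Pu * X) * M0 - 0\<^sub>m m dd = Pu * X * M0"
    proof -
      have "(Pu * X) * M0 \<in> carrier_mat m dd" by (rule cI X lc)+
      thus ?thesis by (intro eq_matI) auto
    qed
    finally show ?thesis .
  qed
  finally show ?thesis .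
qed

lemma Hs_Suc: "Hs (Suc i) = G + \<gamma> \<cdot>\<^sub>m ((Ms i)\<^sup>T * Hs i * Ms i)"
  by (simp add: Let_def)

lemma Hs_carrier: "Hs i \<in> carrier_mat dd dd"
proof (induction i)
  case 0 thus ?case by simp
next
  case (Suc i)
  have M: "Ms i \<in> carrier_mat dd dd" using closedM_carrier[OF gainL_carrier[OF Suc]] .
  show ?case unfolding Hs_Suc by (rule cI G_carrier M Suc)+
qed

lemma Ms_carrier: "Ms i \<in> carrier_mat dd dd"
  using closedM_carrier[OF gainL_carrier[OF Hs_carrier]] .

lemma Hs_sym: "(Hs i)\<^sup>T = Hs i"
proof (induction i)
  case 0 thus ?case by (simp add: transpose_mat_def) (rule eq_matI, auto)
next
  case (Suc i)
  have "(Hs (Suc i))\<^sup>T = G\<^sup>T + (\<gamma> \<cdot>\<^sub>m ((Ms i)\<^sup>T * Hs i * Ms i))\<^sup>T"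
    unfolding Hs_Suc by (rule transpose_add) (rule cI G_carrier Ms_carrier Hs_carrier)+
  also have "(\<gamma> \<cdot>\<^sub>m ((Ms i)\<^sup>T * Hs i * Ms i))\<^sup>T = \<gamma> \<cdot>\<^sub>m ((Ms i)\<^sup>T * Hs i * Ms i)"
    unfolding transpose_smult_mat using sym_PtSP[OF Hs_carrier Suc Ms_carrier] by simp
  finally show ?case unfolding G_sym Hs_Suc[symmetric] .
qed

lemma qf_Hs_Suc: assumes z: "z \<in> carrier_vec dd"
  shows "qf (Hs (Suc i)) z = qf G z + \<gamma> * qf (Hs i) (Ms i *\<^sub>v z)"
proof -
  have "qf (Hs (Suc i)) z = qf G z + qf (\<gamma> \<cdot>\<^sub>m ((Ms i)\<^sup>T * Hs i * Ms i)) z"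
    unfolding Hs_Suc by (rule qf_add) (rule cI G_carrier Ms_carrier Hs_carrier z)+
  also have "qf (\<gamma> \<cdot>\<^sub>m ((Ms i)\<^sup>T * Hs i * Ms i)) z = \<gamma> * qf ((Ms i)\<^sup>T * Hs i * Ms i) z"
    by (rule qf_smult) (rule cI G_carrier Ms_carrier Hs_carrier z)+
  also have "qf ((Ms i)\<^sup>T * Hs i * Ms i) z = qf (Hs i) (Ms i *\<^sub>v z)"
    by (rule qf_PtSP[OF Ms_carrier Hs_carrier z])
  finally show ?thesis .
qed

lemma Hs_nonneg: "z \<in> carrier_vec dd \<Longrightarrow> qf (Hs i) z \<ge> 0"
proof (induction i arbitrary: z)
  case 0 thus ?case by simp
next
  case (Suc i)
  have "Ms i *\<^sub>v z \<in> carrier_vec dd" by (rule cI Ms_carrier Suc.prems)+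
  hence "qf (Hs i) (Ms i *\<^sub>v z) \<ge> 0" by (rule Suc.IH)
  thus ?case unfolding qf_Hs_Suc[OF Suc.prems] using qf_G_nonneg[OF Suc.prems] g0 by simp
qed

lemma Hs_Pr0T: "Hs (Suc i) * Pr0\<^sup>T = G * Pr0\<^sup>T"
proof -
  have MP: "Ms i * Pr0\<^sup>T = 0\<^sub>m dd n" by (rule closedM_Pr0T[OF gainL_carrier[OF Hs_carrier]])
  have "Hs (Suc i) * Pr0\<^sup>T = G * Pr0\<^sup>T + (\<gamma> \<cdot>\<^sub>m ((Ms i)\<^sup>T * Hs i * Ms i)) * Pr0\<^sup>T"
    unfolding Hs_Suc by (rule add_mult_distrib_mat) (rule cI G_carrier Ms_carrier Hs_carrier)+
  also have "(\<gamma> \<cdot>\<^sub>m ((Ms i)\<^sup>T * Hs i * Ms i)) * Pr0\<^sup>T = \<gamma> \<cdot>\<^sub>m (((Ms i)\<^sup>T * Hs i * Ms i) * Pr0\<^sup>T)"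
    by (rule mult_smult_assoc_mat) (rule cI G_carrier Ms_carrier Hs_carrier)+
  also have "((Ms i)\<^sup>T * Hs i * Ms i) * Pr0\<^sup>T = ((Ms i)\<^sup>T * Hs i) * (Ms i * Pr0\<^sup>T)"
    by (rule assoc_mult_mat) (rule cI G_carrier Ms_carrier Hs_carrier)+
  also have "\<dots> = 0\<^sub>m dd n" unfolding MP by (rule right_mult_zero_mat) (rule cI Ms_carrier Hs_carrier)+
  also have "G * Pr0\<^sup>T + \<gamma> \<cdot>\<^sub>m 0\<^sub>m dd n = G * Pr0\<^sup>T"
    by (simp add: right_add_zero_mat[of _ dd n] mult_carrier_mat[OF G_carrier])
  finally show ?thesis .
qed

lemma PuHsPr0T: "Pu * Hs i * Pr0\<^sup>T = 0\<^sub>m m n"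
proof (cases i)
  case 0 thus ?thesis by simp
next
  case (Suc j)
  have "Pu * Hs i * Pr0\<^sup>T = Pu * (Hs i * Pr0\<^sup>T)"
    by (rule assoc_mult_mat) (rule cI Hs_carrier)+
  also have "\<dots> = Pu * (G * Pr0\<^sup>T)" unfolding Suc Hs_Pr0T ..
  also have "\<dots> = Pu * G * Pr0\<^sup>T" by (rule assoc_mult_mat[symmetric]) (rule cI G_carrier)+
  finally show ?thesis using PuGPr0T by simp
qed

end

context lqt begin

lemma huu_qf: assumes X: "X \<in> carrier_mat dd dd" and v: "v \<in> carrier_vec m"
  shows "qf (Pu * X * Pu\<^sup>T) v = qf X (Pu\<^sup>T *\<^sub>v v)"
proof -
  have "Pu\<^sup>T \<in> carrier_mat dd m" by (rule cI)+
  from qf_PtSP[OF this X v] show ?thesis by simp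
qed

lemma huu_pos: assumes v: "v \<in> carrier_vec m" "v \<noteq> 0\<^sub>v m"
  shows "qf (Pu * Hs (Suc j) * Pu\<^sup>T) v > 0"
proof -
  have z: "Pu\<^sup>T *\<^sub>v v \<in> carrier_vec dd" by (rule cI v)+
  have z2: "Ms j *\<^sub>v (Pu\<^sup>T *\<^sub>v v) \<in> carrier_vec dd" by (rule cI Ms_carrier z)+
  have "qf (Pu * Hs (Suc j) * Pu\<^sup>T) v = qf G (Pu\<^sup>T *\<^sub>v v) + \<gamma> * qf (Hs j) (Ms j *\<^sub>v (Pu\<^sup>T *\<^sub>v v))"
    unfolding huu_qf[OF Hs_carrier v(1)] qf_Hs_Suc[OF z] ..
  also have "\<dots> \<ge> qf R v" unfolding qf_G_PuT[OF v(1)] using Hs_nonneg[OF z2, of j] g0 by simp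
  finally show ?thesis using qf_R_pos[OF v] by simp
qed

lemma huu_inv: "\<exists>Hi. mat_inverse (Pu * Hs (Suc j) * Pu\<^sup>T) = Some Hi"
proof -
  let ?U = "Pu * Hs (Suc j) * Pu\<^sup>T"
  have U: "?U \<in> carrier_mat m m" by (rule huu_carrier[OF Hs_carrier])
  have "det ?U \<noteq> 0"
  proof
    assume "det ?U = 0"
    then obtain v where v: "v \<in> carrier_vec m" "v \<noteq> 0\<^sub>v m" "?U *\<^sub>v v = 0\<^sub>v m"
      using det_0_iff_vec_prod_zero[OF U] by auto
    have "qf ?U v = 0" unfolding qf_def v(3) using v(1) by simp
    thus False using huu_pos[OF v(1,2), of j] by linarith
  qed
  show ?thesis
  proof (cases "mat_inverse ?U")
    case None
    have "?U \<notin> Units (ring_mat TYPE(real) m ())" by (rule mat_inverse(1)[OF U None])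
    moreover have "?U \<in> Units (ring_mat TYPE(real) m ())" by (rule det_non_zero_imp_unit[OF U \<open>det ?U \<noteq> 0\<close>])
    ultimately show ?thesis by blast
  qed auto
qed

lemma step_min: assumes y: "y \<in> carrier_vec dd" and u: "u \<in> carrier_vec m"
  shows "qf (Hs (Suc j)) (Ms (Suc j) *\<^sub>v y) \<le> qf (Hs (Suc j)) (M0 *\<^sub>v y + Pu\<^sup>T *\<^sub>v u)"
proof -
  let ?X = "Hs (Suc j)"
  obtain Hi where S: "mat_inverse (Pu * ?X * Pu\<^sup>T) = Some Hi" using huu_inv by blast
  have Hi: "Hi \<in> carrier_mat m m" "Pu * ?X * Pu\<^sup>T * Hi = 1\<^sub>m m"
    using mat_inverse(2)[OF huu_carrier[OF Hs_carrier] S] by auto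
  have L: "gainL n m N ?X \<in> carrier_mat m (n + N*n)" by (rule gainL_carrier[OF Hs_carrier])
  have K: "Kg (gainL n m N ?X) = - (Hi * (Pu * ?X * M0))"
    by (rule Kg_gain[OF Hs_carrier PuHsPr0T S])
  define w where "w = M0 *\<^sub>v y"
  have w: "w \<in> carrier_vec dd" unfolding w_def by (rule cI lc y)+
  have KH: "Hi * (Pu * ?X * M0) \<in> carrier_mat m dd" by (rule cI Hi Hs_carrier lc)+
  have "Ms (Suc j) *\<^sub>v y = (M0 + Pu\<^sup>T * Kg (gainL n m N ?X)) *\<^sub>v y" unfolding closedM_split[OF L] ..
  also have "\<dots> = w + (Pu\<^sup>T * Kg (gainL n m N ?X)) *\<^sub>v y"
    unfolding w_def by (rule add_mult_distrib_mat_vec) (rule cI lc y Kg_carrier L)+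
  also have "(Pu\<^sup>T * Kg (gainL n m N ?X)) *\<^sub>v y = Pu\<^sup>T *\<^sub>v (Kg (gainL n m N ?X) *\<^sub>v y)"
    by (rule assoc_mult_mat_vec) (rule cI lc y Kg_carrier L)+
  also have "Kg (gainL n m N ?X) *\<^sub>v y = - (Hi *\<^sub>v (Pu *\<^sub>v (?X *\<^sub>v w)))"
  proof -
    have "Kg (gainL n m N ?X) *\<^sub>v y = - ((Hi * (Pu * ?X * M0)) *\<^sub>v y)"
      unfolding K using KH y by (simp add: carrier_vecD)
    also have "(Hi * (Pu * ?X * M0)) *\<^sub>v y = Hi *\<^sub>v ((Pu * ?X * M0) *\<^sub>v y)"
      by (rule assoc_mult_mat_vec) (rule cI Hi Hs_carrier lc y)+
    also have "(Pu * ?X * M0) *\<^sub>v y = (Pu * ?X) *\<^sub>v w"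
      unfolding w_def by (rule assoc_mult_mat_vec) (rule cI Hi Hs_carrier lc y)+
    also have "(Pu * ?X) *\<^sub>v w = Pu *\<^sub>v (?X *\<^sub>v w)"
      by (rule assoc_mult_mat_vec) (rule cI Hi Hs_carrier lc w)+
    finally show ?thesis .
  qed
  finally have eq: "Ms (Suc j) *\<^sub>v y = w + Pu\<^sup>T *\<^sub>v (- (Hi *\<^sub>v (Pu *\<^sub>v (?X *\<^sub>v w))))" .
  have psd: "\<And>v. v \<in> carrier_vec m \<Longrightarrow> qf (Pu * ?X * Pu\<^sup>T) v \<ge> 0"
  proof -
    fix v :: "real vec" assume v: "v \<in> carrier_vec m"
    have "Pu\<^sup>T *\<^sub>v v \<in> carrier_vec dd" by (rule cI v)+
    thus "qf (Pu * ?X * Pu\<^sup>T) v \<ge> 0" unfolding huu_qf[OF Hs_carrier v] by (rule Hs_nonneg)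
  qed
  show ?thesis unfolding eq w_def[symmetric]
    by (rule complete_square[OF Hs_carrier Hs_sym sel_carrier Hi psd w u])
qed

end

lemma (in vec_space) full_rank_span:
  assumes C: "C \<in> carrier_mat n nc" and r: "rank C = n"
  shows "carrier_vec n \<subseteq> span (set (cols C))"
proof -
  let ?S = "set (cols C)"
  have SV: "?S \<subseteq> carrier_vec n" using C cols_dim by blast
  have vs: "vectorspace class_ring (span_vs ?S)"
    using field.field_axioms span_is_submodule[OF SV] submodule_is_module vectorspace_def by auto
  have fd: "vectorspace.fin_dim class_ring (span_vs ?S)" using fin_dim_span_cols[OF C] by simp
  obtain b where b: "finite b" "vectorspace.basis class_ring (span_vs ?S) b"
    using vectorspace.finite_basis_exists[OF vs fd] by blast
  have cb: "card b = n" using vectorspace.dim_basis[OF vs b] r unfolding rank_def by simp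
  have bsub: "b \<subseteq> span ?S" using b(2) unfolding vectorspace.basis_def[OF vs] by simp
  have li0: "module.lin_indpt class_ring (span_vs ?S) b" using b(2) unfolding vectorspace.basis_def[OF vs] by simp
  have li: "lin_indpt b" using li0 span_li_not_depend(2)[OF bsub span_is_submodule[OF SV]] by simp
  have bV: "b \<subseteq> carrier_vec n" using bsub span_is_subset2[OF SV] by auto
  have "basis b" by (rule dim_li_is_basis[OF fin_dim b(1)]) (use bV li cb dim_is_n in auto)
  hence "span b = carrier_vec n" unfolding basis_def by simp
  moreover have "span b \<subseteq> span ?S" by (rule span_is_subset[OF bsub span_is_submodule[OF SV]])
  ultimately show ?thesis by simp
qed

lemma right_inverse_ex:
  fixes C :: "real mat"
  assumes C: "C \<in> carrier_mat n k" and r: "vec_space.rank n C = n"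
  shows "\<exists>W. W \<in> carrier_mat k n \<and> C * W = 1\<^sub>m n"
proof -
  have ex: "\<exists>x. x \<in> carrier_vec k \<and> C *\<^sub>v x = unit_vec n i" if i: "i < n" for i
  proof -
    have "unit_vec n i \<in> vec_space.col_space n C" (is "?u \<in> _")
      using vec_space.full_rank_span[OF C r] i by (auto simp: vec_space.col_space_def)
    thus ?thesis using vec_space.col_space_eq[OF C] C by auto
  qed
  define xs where "xs i = (SOME x. x \<in> carrier_vec k \<and> C *\<^sub>v x = unit_vec n i)" for i
  have xs: "xs i \<in> carrier_vec k" "C *\<^sub>v xs i = unit_vec n i" if "i < n" for i
    using someI_ex[OF ex[OF that]] unfolding xs_def by auto
  define W where "W = mat k n (\<lambda>(r,c). xs c $ r)"
  have W: "W \<in> carrier_mat k n" unfolding W_def by simp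
  have "C * W = 1\<^sub>m n"
  proof (rule eq_matI)
    fix i c assume ic: "i < dim_row (1\<^sub>m n :: real mat)" "c < dim_col (1\<^sub>m n :: real mat)"
    hence ic': "i < n" "c < n" by auto
    have colW: "col W c = xs c" unfolding W_def using ic' xs(1)[OF ic'(2)] by (auto intro!: eq_vecI)
    have "(C * W) $$ (i,c) = row C i \<bullet> xs c" using C W ic' colW by simp
    also have "\<dots> = (C *\<^sub>v xs c) $ i" using C ic' by simp
    also have "\<dots> = (1\<^sub>m n :: real mat) $$ (i,c)" using xs(2)[OF ic'(2)] ic' by simp
    finally show "(C * W) $$ (i,c) = (1\<^sub>m n :: real mat) $$ (i,c)" .
  qed (use C W in auto)
  thus ?thesis using W by blast
qed


lemma pow_mat_Suc_left: assumes A: "(A :: real mat) \<in> carrier_mat n n" shows "A * A ^\<^sub>m k = A ^\<^sub>m Suc k"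
proof (induction k)
  case 0 thus ?case using A by simp
next
  case (Suc k)
  have "A * A ^\<^sub>m Suc k = A * (A ^\<^sub>m k * A)" by simp
  also have "\<dots> = (A * A ^\<^sub>m k) * A" by (rule assoc_mult_mat[symmetric]) (use A in auto)
  also have "\<dots> = A ^\<^sub>m Suc (Suc k)" using Suc by simp
  finally show ?case .
qed

lemma block_iff: assumes r: "(r::nat) < m" shows "(q*m \<le> l*m + r \<and> l*m + r < q*m + m) = (l = q)"
proof (cases "l < q")
  case True
  hence "Suc l * m \<le> q * m" by (intro mult_le_mono1) simp
  thus ?thesis using r True by simp
next
  case False
  show ?thesis
  proof (cases "l = q")
    case True thus ?thesis using r by simp
  next
    case False2: False
    hence "Suc q * m \<le> l * m" using False by (intro mult_le_mono1) simp
    thus ?thesis using False2 by simp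
  qed
qed

context lqt begin

lemma ctrb_carrier: "ctrb n m A B \<in> carrier_mat n (n*m)" by (simp add: ctrb_def)

definition "Dm j = mat n (n*m) (\<lambda>(i,c). if n - j \<le> c div m then (A ^\<^sub>m (c div m - (n-j)) * B) $$ (i, c mod m) else 0)"

lemma Dm_carrier[simp]: "Dm j \<in> carrier_mat n (n*m)" by (simp add: Dm_def)

lemma Dm_dims[simp]: "dim_row (Dm j) = n" "dim_col (Dm j) = n*m" by (simp_all add: Dm_def)

lemma Dm0: "Dm 0 = 0\<^sub>m n (n*m)"
proof (rule eq_matI)
  fix i c assume "i < dim_row (0\<^sub>m n (n*m) :: real mat)" "c < dim_col (0\<^sub>m n (n*m) :: real mat)"
  hence "c < n*m" by simp
  hence "c div m < n" by (simp add: less_mult_imp_div_less)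
  thus "Dm 0 $$ (i,c) = 0\<^sub>m n (n*m) $$ (i,c)" using \<open>i < _\<close> \<open>c < n*m\<close> by (simp add: Dm_def)
qed (auto simp: Dm_def)

lemma Dm_n: "Dm n = ctrb n m A B"
  by (rule eq_matI) (auto simp: Dm_def ctrb_def)

lemma Dm_Suc: assumes j: "j < n"
  shows "Dm (Suc j) = A * Dm j + B * sel m ((n - Suc j)*m) (n*m)"
proof (rule eq_matI)
  fix i c assume ic: "i < dim_row (A * Dm j + B * sel m ((n - Suc j)*m) (n*m))" "c < dim_col (A * Dm j + B * sel m ((n - Suc j)*m) (n*m))"
  hence i: "i < n" and c: "c < n*m" using A B by auto
  hence m0: "0 < m" by (cases m) auto
  define l where "l = c div m"
  define r where "r = c mod m"
  have cl: "c = l*m + r" "r < m" unfolding l_def r_def using m0 by simp_all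
  have "l < n" using c unfolding l_def by (simp add: less_mult_imp_div_less)
  have colD: "col (Dm j) c = (if n - j \<le> l then col (A ^\<^sub>m (l - (n-j)) * B) r else 0\<^sub>v n)"
    by (rule eq_vecI) (use c A B cl(2) in \<open>auto simp: Dm_def l_def[symmetric] r_def[symmetric]\<close>)
  have AD: "(A * Dm j) $$ (i,c) = (if n - j \<le> l then (A ^\<^sub>m (Suc (l - (n-j))) * B) $$ (i,r) else 0)"
  proof (cases "n - j \<le> l")
    case True
    have "(A * Dm j) $$ (i,c) = row A i \<bullet> col (A ^\<^sub>m (l - (n-j)) * B) r"
      using i c A True by (simp add: colD)
    also have "\<dots> = (A * (A ^\<^sub>m (l - (n-j)) * B)) $$ (i,r)" using i cl(2) A B by simp
    also have "A * (A ^\<^sub>m (l - (n-j)) * B) = (A * A ^\<^sub>m (l - (n-j))) * B"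
      by (rule assoc_mult_mat[symmetric]) (use A B in auto)
    also have "\<dots> = A ^\<^sub>m (Suc (l - (n-j))) * B" by (simp add: pow_mat_Suc_left[OF A])
    finally show ?thesis using True by simp
  next
    case False
    have "(A * Dm j) $$ (i,c) = row A i \<bullet> 0\<^sub>v n" using i c A False by (simp add: colD)
    thus ?thesis using False A i by simp
  qed
  have BS: "(B * sel m ((n - Suc j)*m) (n*m)) $$ (i,c) = (if l = n - Suc j then B $$ (i,r) else 0)"
  proof -
    have "B * sel m ((n - Suc j)*m) (n*m) = mat n (n*m) (\<lambda>(i,t). if (n - Suc j)*m \<le> t \<and> t < (n - Suc j)*m + m then B $$ (i, t - (n - Suc j)*m) else 0)"
      by (rule mult_sel[OF B])
    moreover have "((n - Suc j)*m \<le> c \<and> c < (n - Suc j)*m + m) = (l = n - Suc j)"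
      unfolding cl(1) by (rule block_iff[OF cl(2)])
    moreover have "l = n - Suc j \<Longrightarrow> c - (n - Suc j)*m = r" using cl by simp
    ultimately show ?thesis using i c by auto
  qed
  have lhs: "Dm (Suc j) $$ (i,c) = (if n - Suc j \<le> l then (A ^\<^sub>m (l - (n - Suc j)) * B) $$ (i, r) else 0)"
    using i c by (simp add: Dm_def l_def[symmetric] r_def[symmetric])
  show "Dm (Suc j) $$ (i,c) = (A * Dm j + B * sel m ((n - Suc j)*m) (n*m)) $$ (i,c)"
  proof -
    have "(A * Dm j + B * sel m ((n - Suc j)*m) (n*m)) $$ (i,c) = (A * Dm j) $$ (i,c) + (B * sel m ((n - Suc j)*m) (n*m)) $$ (i,c)"
      using i c A B by simp
    also have "\<dots> = Dm (Suc j) $$ (i,c)"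
    proof -
      have e1: "n - j \<le> l \<Longrightarrow> l - (n - Suc j) = Suc (l - (n - j))" using j by simp
      have e2: "l = n - Suc j \<Longrightarrow> l - (n - Suc j) = 0" by simp
      have e3: "A ^\<^sub>m 0 * B = B" using A B by simp
      show ?thesis unfolding AD BS lhs using j e1 e2 e3 by (cases "n - j \<le> l"; cases "l = n - Suc j") (simp_all del: pow_mat.simps)
    qed
    finally show ?thesis by simp
  qed
qed (use A B in auto)

end

locale lqtW = lqt +
  fixes W :: "real mat"
  assumes W: "W \<in> carrier_mat (n*m) n" and CW: "ctrb n m A B * W = 1\<^sub>m n"
begin

definition "V = - (W * (A ^\<^sub>m n * xn))"
definition "U j = (if j = 0 then Pu else if j \<le> n then sel m ((n-j)*m) (n*m) * V else 0\<^sub>m m dd)"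

fun T :: "nat \<Rightarrow> real mat" where
  "T 0 = 1\<^sub>m dd"
| "T (Suc j) = M0 * T j + Pu\<^sup>T * U (Suc j)"

lemma V_carrier[simp]: "V \<in> carrier_mat (n*m) dd"
  unfolding V_def by (rule cI W lc pow_carrier_mat)+

lemma U_carrier[simp]: "U j \<in> carrier_mat m dd"
  unfolding U_def by (auto intro!: cI V_carrier)

lemma T_carrier[simp]: "T j \<in> carrier_mat dd dd"
  by (induction j) (auto intro!: cI lc U_carrier)

lemma PuT: "Pu * T j = U j"
proof (cases j)
  case 0 thus ?thesis by (simp add: U_def)
next
  case (Suc k)
  have "Pu * T j = Pu * (M0 * T k) + Pu * (Pu\<^sup>T * U j)" unfolding Suc T.simps
    by (rule mult_add_distrib_mat) (rule cI lc U_carrier T_carrier)+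
  also have "Pu * (M0 * T k) = (Pu * M0) * T k" by (rule assoc_mult_mat[symmetric]) (rule cI lc T_carrier)+
  also have "\<dots> = 0\<^sub>m m dd" unfolding Pu_M0 by (rule left_mult_zero_mat) (rule T_carrier)
  also have "Pu * (Pu\<^sup>T * U j) = (Pu * Pu\<^sup>T) * U j" by (rule assoc_mult_mat[symmetric]) (rule cI lc U_carrier)+
  also have "\<dots> = U j" unfolding PuPuT by (rule left_mult_one_mat) (rule U_carrier)
  finally show ?thesis by (simp add: left_add_zero_mat[OF U_carrier])
qed

lemma PxT: "Px * T (Suc j) = A * (Px * T j) + B * U j"
proof -
  have "Px * T (Suc j) = Px * (M0 * T j) + Px * (Pu\<^sup>T * U (Suc j))" unfolding T.simps
    by (rule mult_add_distrib_mat) (rule cI lc U_carrier T_carrier)+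
  also have "Px * (M0 * T j) = (Px * M0) * T j" by (rule assoc_mult_mat[symmetric]) (rule cI lc T_carrier)+
  also have "\<dots> = xn * T j" unfolding Px_M0 ..
  also have "\<dots> = (A * Px) * T j + (B * Pu) * T j" unfolding xn_def
    by (rule add_mult_distrib_mat) (rule cI lc T_carrier)+
  also have "(A * Px) * T j = A * (Px * T j)" by (rule assoc_mult_mat) (rule cI lc T_carrier)+
  also have "(B * Pu) * T j = B * U j" unfolding PuT[symmetric] by (rule assoc_mult_mat) (rule cI lc T_carrier)+
  also have "Px * (Pu\<^sup>T * U (Suc j)) = (Px * Pu\<^sup>T) * U (Suc j)" by (rule assoc_mult_mat[symmetric]) (rule cI lc U_carrier)+
  also have "\<dots> = 0\<^sub>m n dd" unfolding PxPuT by (rule left_mult_zero_mat) (rule U_carrier)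
  finally show ?thesis by (simp add: right_add_zero_mat[of _ n dd] mult_carrier_mat[OF A] mult_carrier_mat[OF B])
qed


lemma X_formula: "j \<le> n \<Longrightarrow> Px * T (Suc j) = A ^\<^sub>m j * xn + Dm j * V"
proof (induction j)
  case 0
  have "Px * T (Suc 0) = A * (Px * 1\<^sub>m dd) + B * Pu" unfolding PxT by (simp add: U_def)
  also have "\<dots> = xn" unfolding xn_def by (simp add: right_mult_one_mat[OF sel_carrier])
  also have "\<dots> = A ^\<^sub>m 0 * xn + Dm 0 * V" unfolding Dm0 using A
    by (simp add: left_mult_zero_mat[OF V_carrier] right_add_zero_mat[OF xn_carrier])
  finally show ?case .
next
  case (Suc j)
  hence j: "j < n" by simp
  have U1: "U (Suc j) = sel m ((n - Suc j)*m) (n*m) * V" using Suc.prems by (simp add: U_def)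
  have "Px * T (Suc (Suc j)) = A * (Px * T (Suc j)) + B * U (Suc j)" by (rule PxT)
  also have "\<dots> = A * (A ^\<^sub>m j * xn + Dm j * V) + B * (sel m ((n - Suc j)*m) (n*m) * V)"
    unfolding Suc.IH[OF less_imp_le[OF j]] U1 ..
  also have "A * (A ^\<^sub>m j * xn + Dm j * V) = A * (A ^\<^sub>m j * xn) + A * (Dm j * V)"
    by (rule mult_add_distrib_mat) (rule cI lc pow_carrier_mat Dm_carrier V_carrier)+
  also have "A * (A ^\<^sub>m j * xn) = (A * A ^\<^sub>m j) * xn" by (rule assoc_mult_mat[symmetric]) (rule cI lc pow_carrier_mat)+
  also have "A * A ^\<^sub>m j = A ^\<^sub>m Suc j" by (rule pow_mat_Suc_left[OF A])
  also have "A * (Dm j * V) = (A * Dm j) * V" by (rule assoc_mult_mat[symmetric]) (rule cI lc Dm_carrier V_carrier)+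
  also have "B * (sel m ((n - Suc j)*m) (n*m) * V) = (B * sel m ((n - Suc j)*m) (n*m)) * V"
    by (rule assoc_mult_mat[symmetric]) (rule cI lc V_carrier)+
  also have "A ^\<^sub>m Suc j * xn + (A * Dm j) * V + (B * sel m ((n - Suc j)*m) (n*m)) * V
      = A ^\<^sub>m Suc j * xn + ((A * Dm j) * V + (B * sel m ((n - Suc j)*m) (n*m)) * V)"
    by (rule assoc_add_mat) (rule cI lc pow_carrier_mat Dm_carrier V_carrier)+
  also have "(A * Dm j) * V + (B * sel m ((n - Suc j)*m) (n*m)) * V = (A * Dm j + B * sel m ((n - Suc j)*m) (n*m)) * V"
    by (rule add_mult_distrib_mat[symmetric]) (rule cI lc Dm_carrier V_carrier)+
  also have "A * Dm j + B * sel m ((n - Suc j)*m) (n*m) = Dm (Suc j)" by (rule Dm_Suc[OF j, symmetric])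
  finally show ?case .
qed

lemma X_zero: "Px * T (Suc n) = 0\<^sub>m n dd"
proof -
  let ?Z = "A ^\<^sub>m n * xn"
  have Z: "?Z \<in> carrier_mat n dd" by (rule cI lc pow_carrier_mat)+
  have "Px * T (Suc n) = ?Z + ctrb n m A B * V" unfolding X_formula[OF le_refl] Dm_n ..
  also have "ctrb n m A B * V = - (ctrb n m A B * (W * ?Z))" unfolding V_def
    by (rule uminus_mult_right_mat) (use ctrb_carrier W in auto)
  also have "ctrb n m A B * (W * ?Z) = (ctrb n m A B * W) * ?Z" by (rule assoc_mult_mat[symmetric]) (rule ctrb_carrier W Z)+
  also have "\<dots> = ?Z" unfolding CW by (rule left_mult_one_mat[OF Z])
  finally show ?thesis using Z by (intro eq_matI) auto
qed

lemma U_zero: "n < j \<Longrightarrow> U j = 0\<^sub>m m dd" by (simp add: U_def)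

lemma X_zero_ge: "Suc n \<le> j \<Longrightarrow> Px * T j = 0\<^sub>m n dd"
proof (induction j rule: dec_induct)
  case base thus ?case by (rule X_zero)
next
  case (step j)
  have "Px * T (Suc j) = A * 0\<^sub>m n dd + B * 0\<^sub>m m dd" unfolding PxT step.IH U_zero[OF step.hyps(1)[THEN Suc_le_lessD]] ..
  thus ?case using A B by (simp add: right_mult_zero_mat)
qed

lemma PrT: "k \<le> N \<Longrightarrow> N < k + j \<Longrightarrow> Pr k * T j = 0\<^sub>m n dd"
proof (induction j arbitrary: k)
  case 0 thus ?case by simp
next
  case (Suc j)
  have "Pr k * T (Suc j) = Pr k * (M0 * T j) + Pr k * (Pu\<^sup>T * U (Suc j))" unfolding T.simps
    by (rule mult_add_distrib_mat) (rule cI lc U_carrier T_carrier)+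
  also have "Pr k * (M0 * T j) = (Pr k * M0) * T j" by (rule assoc_mult_mat[symmetric]) (rule cI lc T_carrier)+
  also have "\<dots> = 0\<^sub>m n dd"
  proof (cases "k < N")
    case True
    hence "Pr (k+1) * T j = 0\<^sub>m n dd" using Suc.prems by (intro Suc.IH) auto
    thus ?thesis unfolding Pr_M0[OF Suc.prems(1)] using True by simp
  next
    case False
    thus ?thesis unfolding Pr_M0[OF Suc.prems(1)] by (simp add: left_mult_zero_mat[OF T_carrier])
  qed
  also have "Pr k * (Pu\<^sup>T * U (Suc j)) = (Pr k * Pu\<^sup>T) * U (Suc j)" by (rule assoc_mult_mat[symmetric]) (rule cI lc U_carrier)+
  also have "\<dots> = 0\<^sub>m n dd" unfolding PrPuT[OF Suc.prems(1)] by (rule left_mult_zero_mat) (rule U_carrier)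
  finally show ?case by simp
qed

lemma qf_G_T_zero: assumes j: "n + N + 1 \<le> j" and z: "z \<in> carrier_vec dd"
  shows "qf G (T j *\<^sub>v z) = 0"
proof -
  have Tz: "T j *\<^sub>v z \<in> carrier_vec dd" by (rule cI T_carrier z)+
  have PxTj: "Px * T j = 0\<^sub>m n dd" using j by (intro X_zero_ge) simp
  have Pr0Tj: "Pr0 * T j = 0\<^sub>m n dd" using PrT[of 0 j] j by (simp add: Pr_def)
  have PuTj: "Pu * T j = 0\<^sub>m m dd" unfolding PuT using j by (intro U_zero) simp
  have ET: "E * T j = 0\<^sub>m n dd"
  proof -
    have "E * T j = Px * T j - Pr0 * T j" by (rule minus_mult_distrib_mat) (rule cI T_carrier)+
    thus ?thesis unfolding PxTj Pr0Tj by simp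
  qed
  have 1: "E *\<^sub>v (T j *\<^sub>v z) = 0\<^sub>v n"
  proof -
    have "E *\<^sub>v (T j *\<^sub>v z) = (E * T j) *\<^sub>v z" by (rule assoc_mult_mat_vec[symmetric]) (rule cI T_carrier z)+
    thus ?thesis unfolding ET using z by (simp add: zero_mat_vec)
  qed
  have 2: "Pu *\<^sub>v (T j *\<^sub>v z) = 0\<^sub>v m"
  proof -
    have "Pu *\<^sub>v (T j *\<^sub>v z) = (Pu * T j) *\<^sub>v z" by (rule assoc_mult_mat_vec[symmetric]) (rule cI T_carrier z)+
    thus ?thesis unfolding PuTj using z by (simp add: zero_mat_vec)
  qed
  have "qf Q (0\<^sub>v n) = 0" unfolding qf_def by (rule scalar_prod_left_zero) (rule cI lc)+
  moreover have "qf R (0\<^sub>v m) = 0" unfolding qf_def by (rule scalar_prod_left_zero) (rule cI lc)+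
  ultimately show ?thesis unfolding qf_G[OF Tz] 1 2 by simp
qed

end

context lqtW begin

lemma T_Suc_vec: assumes z: "z \<in> carrier_vec dd"
  shows "T (Suc k) *\<^sub>v z = M0 *\<^sub>v (T k *\<^sub>v z) + Pu\<^sup>T *\<^sub>v (U (Suc k) *\<^sub>v z)"
proof -
  have "T (Suc k) *\<^sub>v z = (M0 * T k) *\<^sub>v z + (Pu\<^sup>T * U (Suc k)) *\<^sub>v z" unfolding T.simps
    by (rule add_mult_distrib_mat_vec) (rule cI lc T_carrier U_carrier z)+
  also have "(M0 * T k) *\<^sub>v z = M0 *\<^sub>v (T k *\<^sub>v z)" by (rule assoc_mult_mat_vec) (rule cI lc T_carrier U_carrier z)+
  also have "(Pu\<^sup>T * U (Suc k)) *\<^sub>v z = Pu\<^sup>T *\<^sub>v (U (Suc k) *\<^sub>v z)" by (rule assoc_mult_mat_vec) (rule cI lc T_carrier U_carrier z)+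
  finally show ?thesis .
qed

lemma main_bound: assumes z: "z \<in> carrier_vec dd"
  shows "qf (Hs i) (T k *\<^sub>v z) \<le> (\<Sum>j<i. \<gamma>^j * qf G (T (k+j) *\<^sub>v z))"
proof (induction i arbitrary: k)
  case 0
  have "T k *\<^sub>v z \<in> carrier_vec dd" by (rule cI T_carrier z)+
  thus ?case by simp
next
  case (Suc i)
  have Tz: "T k *\<^sub>v z \<in> carrier_vec dd" by (rule cI T_carrier z)+
  have Uz: "U (Suc k) *\<^sub>v z \<in> carrier_vec m" by (rule cI U_carrier z)+
  have step: "qf (Hs i) (Ms i *\<^sub>v (T k *\<^sub>v z)) \<le> qf (Hs i) (T (Suc k) *\<^sub>v z)"
  proof (cases i)
    case 0
    have "Ms i *\<^sub>v (T k *\<^sub>v z) \<in> carrier_vec dd" "T (Suc k) *\<^sub>v z \<in> carrier_vec dd" by (rule cI Ms_carrier T_carrier z)+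
    thus ?thesis using 0 by simp
  next
    case (Suc i')
    show ?thesis unfolding T_Suc_vec[OF z] Suc by (rule step_min[OF Tz Uz])
  qed
  have IH: "qf (Hs i) (T (Suc k) *\<^sub>v z) \<le> (\<Sum>j<i. \<gamma>^j * qf G (T (Suc k + j) *\<^sub>v z))" by (rule Suc.IH)
  have "qf (Hs (Suc i)) (T k *\<^sub>v z) = qf G (T k *\<^sub>v z) + \<gamma> * qf (Hs i) (Ms i *\<^sub>v (T k *\<^sub>v z))"
    by (rule qf_Hs_Suc[OF Tz])
  also have "\<dots> \<le> qf G (T k *\<^sub>v z) + \<gamma> * (\<Sum>j<i. \<gamma>^j * qf G (T (Suc k + j) *\<^sub>v z))"
    using step IH g0 by (simp add: mult_left_mono)
  also have "\<dots> = (\<Sum>j<Suc i. \<gamma>^j * qf G (T (k+j) *\<^sub>v z))"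
    unfolding sum.lessThan_Suc_shift by (simp add: sum_distrib_left mult.assoc del: T.simps sum.lessThan_Suc)
  finally show ?case .
qed

fun Ysum :: "nat \<Rightarrow> real mat" where
  "Ysum 0 = 0\<^sub>m dd dd"
| "Ysum (Suc j) = Ysum j + (T j)\<^sup>T * G * T j"

lemma Ysum_carrier[simp]: "Ysum j \<in> carrier_mat dd dd"
  by (induction j) (auto intro!: cI G_carrier T_carrier)

lemma Ysum_sym: "(Ysum j)\<^sup>T = Ysum j"
proof (induction j)
  case 0 thus ?case by (auto intro!: eq_matI)
next
  case (Suc j)
  have "(Ysum (Suc j))\<^sup>T = (Ysum j)\<^sup>T + ((T j)\<^sup>T * G * T j)\<^sup>T"
    unfolding Ysum.simps by (rule transpose_add) (rule cI G_carrier T_carrier Ysum_carrier)+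
  also have "((T j)\<^sup>T * G * T j)\<^sup>T = (T j)\<^sup>T * G * T j" by (rule sym_PtSP[OF G_carrier G_sym T_carrier])
  finally show ?case using Suc by simp
qed

lemma qf_Ysum: assumes z: "z \<in> carrier_vec dd" shows "qf (Ysum K) z = (\<Sum>j<K. qf G (T j *\<^sub>v z))"
proof (induction K)
  case 0 thus ?case using z by simp
next
  case (Suc K)
  have "qf (Ysum (Suc K)) z = qf (Ysum K) z + qf ((T K)\<^sup>T * G * T K) z"
    unfolding Ysum.simps by (rule qf_add) (rule cI G_carrier T_carrier Ysum_carrier z)+
  also have "qf ((T K)\<^sup>T * G * T K) z = qf G (T K *\<^sub>v z)" by (rule qf_PtSP[OF T_carrier G_carrier z])
  finally show ?case using Suc by simp
qed

lemma final_bound: assumes z: "z \<in> carrier_vec dd"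
  shows "qf (Hs i) z \<le> qf (Ysum (n+N+1)) z"
proof -
  let ?K = "n+N+1"
  define g where "g j = qf G (T j *\<^sub>v z)" for j
  have g0': "g j \<ge> 0" for j unfolding g_def by (rule qf_G_nonneg) (rule cI T_carrier z)+
  have gK: "g j = 0" if "?K \<le> j" for j unfolding g_def by (rule qf_G_T_zero[OF that z])
  have "qf (Hs i) z = qf (Hs i) (T 0 *\<^sub>v z)" using z by simp
  also have "\<dots> \<le> (\<Sum>j<i. \<gamma>^j * g j)" using main_bound[OF z, of i 0] by (simp add: g_def)
  also have "\<dots> \<le> (\<Sum>j<i. g j)"
  proof (rule sum_mono)
    fix j assume "j \<in> {..<i}"
    have "\<gamma>^j \<le> 1" using g0 g1 by (simp add: power_le_one)
    thus "\<gamma>^j * g j \<le> g j" using g0'[of j] by (simp add: mult_left_le_one_le g0)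
  qed
  also have "\<dots> \<le> (\<Sum>j<max i ?K. g j)" by (rule sum_mono2) (use g0' in auto)
  also have "\<dots> = (\<Sum>j<?K. g j)" by (rule sum.mono_neutral_right) (use gK in auto)
  also have "\<dots> = qf (Ysum ?K) z" unfolding qf_Ysum[OF z] g_def ..
  finally show ?thesis .
qed

end

theorem lemma7:
  fixes n m N :: nat and A B Q R :: "real mat" and \<gamma> :: real
  assumes "A \<in> carrier_mat n n" and "B \<in> carrier_mat n m"
    and "psd n Q" and "pd m R"
    and "0 \<le> \<gamma>" and "\<gamma> < 1"
    and "controllable n m A B"
  shows "\<exists>Y. \<forall>i. loewner_le (dimH n m N) (0\<^sub>m (dimH n m N) (dimH n m N)) (Hseq n m N A B Q R \<gamma> i)
              \<and> loewner_le (dimH n m N) (Hseq n m N A B Q R \<gamma> i) Y"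
proof -
  interpret lqt n m N A B Q R \<gamma> using assms by unfold_locales
  obtain W where W: "W \<in> carrier_mat (n*m) n" "ctrb n m A B * W = 1\<^sub>m n"
    using right_inverse_ex[OF ctrb_carrier] assms(7) unfolding controllable_def by blast
  interpret lqtW n m N A B Q R \<gamma> W using W by unfold_locales
  let ?Y = "Ysum (n+N+1)"
  have "loewner_le dd (0\<^sub>m dd dd) (Hs i) \<and> loewner_le dd (Hs i) ?Y" for i
  proof
    have "Hs i - 0\<^sub>m dd dd = Hs i" using Hs_carrier[of i] by (intro eq_matI) auto
    thus "loewner_le dd (0\<^sub>m dd dd) (Hs i)"
      unfolding loewner_le_def psd_def using Hs_carrier Hs_sym Hs_nonneg by (simp add: qf_def)
  next
    have c: "?Y - Hs i \<in> carrier_mat dd dd" by (rule cI Ysum_carrier Hs_carrier)+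
    have s: "(?Y - Hs i)\<^sup>T = ?Y - Hs i"
      using transpose_minus[OF Ysum_carrier Hs_carrier] Ysum_sym Hs_sym by (simp del: Ysum.simps)
    have q: "v \<bullet> ((?Y - Hs i) *\<^sub>v v) \<ge> 0" if v: "v \<in> carrier_vec dd" for v
      using qf_minus[OF Ysum_carrier Hs_carrier v] final_bound[OF v, of i] unfolding qf_def by (simp del: Ysum.simps)
    show "loewner_le dd (Hs i) ?Y" unfolding loewner_le_def psd_def using c s q Hs_carrier Ysum_carrier by blast
  qed
  thus ?thesis by blast
qed


end
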